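(* Let $T_0,T$ be spanning trees of $G$ and $M_0=M_{T_0}$. Then $\Psi_{M_0}(M_T)$ is the class in $K(G^+)$ of the divisor $\chi\in\mathbb Z^W$ with $\chi(w_e)=1$ if the edge $e$ of $G$ has different directions in $O_{T_0}$ and $O_T$, and $\chi(w_e)=0$ otherwise.
   Context: $G$ is a finite connected planar graph (multi-edges allowed, no loops) with a fixed embedding in the plane, and $q$ is a fixed vertex of $G$ lying on the boundary of the infinite (outer) face. Let $G^\vee$ be the planar dual and $q^*$ the dual vertex of the outer face. Superimpose $G$ and $G^\vee$ so that each edge $e$ of $G$ crosses exactly its dual edge $e^*$, place a new vertex $w_e$ at each crossing, so each edge of $G$ and of $G^\vee$ is split into two half-edges; then delete $q$, $q^*$ and all half-edges incident to them. The resulting planar bipartite graph is $G^+$, with white vertices $W=\{w_e: e\in E(G)\}$ and black vertices the vertices of $G$ other than $q$ and the bounded faces of $G$. For a spanning tree $T$ of $G$, the orientation $O_T$ of $G$ orients each edge of $T$ away from $q$ and each edge $e\notin T$ counterclockwise around the unique cycle in $T\cup\{e\}$. Given an orientation $O$ of $G$, the induced orientation $\widehat O$ of $G^+$ is: each half-edge of an edge $e$ of $G$ is oriented in the direction of $e$ in $O$; each half-edge of a dual edge $e^*$ is oriented as the $90^\circ$ counterclockwise rotation of the $O$-direction of $e$. An edge of $G^+$ is positively oriented if it points from its white endpoint to its black endpoint, negatively oriented otherwise. The Temperley matching $M_T$ consists of, for each $e\in T$, the positively oriented (in $\widehat{O_T}$) half-edge of $e$ at $w_e$, and for each $e\notin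 T$, the positively oriented half-edge of $e^*$ at $w_e$. Kasteleyn cokernel: for a $q$-connected orientation $O$ and each black vertex $b$ let $r_b\in\mathbb Z^W$ have $w$-coordinate equal to (number of edges between $w$ and $b$ oriented $w\to b$ in $\widehat O$) minus (number oriented $b\to w$). $\mathrm{Prin}(G^+)$ is the subgroup of $\mathbb Z^W$ generated by the $r_b$, and $K(G^+)=\mathbb Z^W/\mathrm{Prin}(G^+)$. For a reference perfect matching $M_0=M_{T_0}$, use the orientation $\widehat{O_{T_0}}$. For a perfect matching $M$, $M_0\triangle M$ is a disjoint union of cycles; define $d\in\mathbb Z^W$ by $d(w)=1$ if $w$ lies on $M_0\triangle M$ and its two incident edges in $M_0\triangle M$ have opposite orientations (one positively, one negatively oriented), and $d(w)=0$ otherwise; $\Psi_{M_0}(M)=[d]\in K(G^+)$. *)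

theory Defs
  imports Main
begin

text \<open>A connected plane multigraph G is encoded by its set of darts (half-edges
  with a direction), the involution alpha reversing a dart, and the permutation
  sigma giving the counterclockwise cyclic order of the darts leaving each vertex.
  Vertices are the sigma-orbits, edges are the pairs {d, alpha d}, faces are the
  orbits of phi = sigma o alpha; the phi-orbit of d is the face lying to the
  right of d. The outer (infinite) face is the face to the right of the dart
  outer_dart. A dart d goes from its tail vert d to its head vert (alpha d).\<close>

record 'd pmap =
  darts :: "'d set"
  alpha :: "'d \<Rightarrow> 'd"
  sigma :: "'d \<Rightarrow> 'd"
  outer_dart :: 'd

definition orb :: "('d \<Rightarrow> 'd) \<Rightarrow> 'd \<Rightarrow> 'd set" where
  "orb f d = {(f ^^ n) d | n. True}"

definition perm_on :: "'d set \<Rightarrow> ('d \<Rightarrow> 'd) \<Rightarrow> bool" where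
  "perm_on A f \<longleftrightarrow> bij_betw f A A \<and> (\<forall>x. x \<notin> A \<longrightarrow> f x = x)"

definition phi :: "'d pmap \<Rightarrow> 'd \<Rightarrow> 'd" where
  "phi G = sigma G \<circ> alpha G"

definition vert :: "'d pmap \<Rightarrow> 'd \<Rightarrow> 'd set" where
  "vert G d = orb (sigma G) d"

definition edg :: "'d pmap \<Rightarrow> 'd \<Rightarrow> 'd set" where
  "edg G d = {d, alpha G d}"

definition rface :: "'d pmap \<Rightarrow> 'd \<Rightarrow> 'd set" where
  "rface G d = orb (phi G) d"

definition lface :: "'d pmap \<Rightarrow> 'd \<Rightarrow> 'd set" where
  "lface G d = rface G (alpha G d)"

definition verts :: "'d pmap \<Rightarrow> 'd set set" where
  "verts G = vert G ` darts G"

definition edges :: "'d pmap \<Rightarrow> 'd set set" where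
  "edges G = edg G ` darts G"

definition faces :: "'d pmap \<Rightarrow> 'd set set" where
  "faces G = rface G ` darts G"

definition outer_face :: "'d pmap \<Rightarrow> 'd set" where
  "outer_face G = rface G (outer_dart G)"

definition map_connected :: "'d pmap \<Rightarrow> bool" where
  "map_connected G \<longleftrightarrow>
     darts G \<times> darts G \<subseteq>
       ({(x, alpha G x) | x. x \<in> darts G} \<union> {(x, sigma G x) | x. x \<in> darts G})\<^sup>*"

text \<open>finite connected plane graph (genus 0 by Euler's formula), multi-edges
  allowed, no loops\<close>
definition plane_graph :: "'d pmap \<Rightarrow> bool" where
  "plane_graph G \<longleftrightarrow>
     finite (darts G) \<and> perm_on (darts G) (alpha G) \<and> perm_on (darts G) (sigma G) \<and>
     (\<forall>d \<in> darts G. alpha G d \<noteq> d \<and> alpha G (alpha G d) = d) \<and>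
     (\<forall>d \<in> darts G. vert G (alpha G d) \<noteq> vert G d) \<and>
     map_connected G \<and>
     int (card (verts G)) - int (card (edges G)) + int (card (faces G)) = 2 \<and>
     outer_dart G \<in> darts G"

definition on_outer_face :: "'d pmap \<Rightarrow> 'd set \<Rightarrow> bool" where
  "on_outer_face G v \<longleftrightarrow> (\<exists>d \<in> outer_face G. vert G d = v)"

definition walk_in :: "'d pmap \<Rightarrow> 'd set set \<Rightarrow> 'd list \<Rightarrow> bool" where
  "walk_in G S ds \<longleftrightarrow> ds \<noteq> [] \<and> set ds \<subseteq> darts G \<and> (\<forall>d \<in> set ds. edg G d \<in> S) \<and>
     (\<forall>i. Suc i < length ds \<longrightarrow> vert G (alpha G (ds ! i)) = vert G (ds ! Suc i))"

definition path_verts :: "'d pmap \<Rightarrow> 'd list \<Rightarrow> 'd set list" where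
  "path_verts G ds = map (vert G) ds @ [vert G (alpha G (last ds))]"

definition simple_path :: "'d pmap \<Rightarrow> 'd set set \<Rightarrow> 'd list \<Rightarrow> bool" where
  "simple_path G S ds \<longleftrightarrow> walk_in G S ds \<and> distinct (path_verts G ds)"

definition dcycle :: "'d pmap \<Rightarrow> 'd set set \<Rightarrow> 'd list \<Rightarrow> bool" where
  "dcycle G S ds \<longleftrightarrow> walk_in G S ds \<and> vert G (alpha G (last ds)) = vert G (hd ds) \<and>
     distinct (map (vert G) ds) \<and> distinct (map (edg G) ds)"

definition joined_in :: "'d pmap \<Rightarrow> 'd set set \<Rightarrow> 'd set \<Rightarrow> 'd set \<Rightarrow> bool" where
  "joined_in G S u v \<longleftrightarrow> u = v \<or>
     (\<exists>ds. simple_path G S ds \<and> vert G (hd ds) = u \<and> vert G (alpha G (last ds)) = v)"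

definition spanning_tree :: "'d pmap \<Rightarrow> 'd set set \<Rightarrow> bool" where
  "spanning_tree G T \<longleftrightarrow> T \<subseteq> edges G \<and>
     (\<forall>u \<in> verts G. \<forall>v \<in> verts G. joined_in G T u v) \<and> \<not> (\<exists>ds. dcycle G T ds)"

text \<open>Faces outside a cycle with edge set C: those reachable from the outer face
  in the dual graph without crossing an edge of C.\<close>
definition dual_step :: "'d pmap \<Rightarrow> 'd set set \<Rightarrow> ('d set \<times> 'd set) set" where
  "dual_step G C = {(rface G x, lface G x) | x. x \<in> darts G \<and> edg G x \<notin> C}"

definition inside_faces :: "'d pmap \<Rightarrow> 'd set set \<Rightarrow> 'd set set" where
  "inside_faces G C = faces G - {f. (outer_face G, f) \<in> (dual_step G C)\<^sup>*}"

text \<open>A directed cycle is counterclockwise iff its interior lies on its left.\<close>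
definition ccw_cycle :: "'d pmap \<Rightarrow> 'd list \<Rightarrow> bool" where
  "ccw_cycle G ds \<longleftrightarrow> (\<forall>x \<in> set ds. lface G x \<in> inside_faces G (edg G ` set ds))"

text \<open>An orientation is represented by the set of darts giving the chosen
  direction of each edge. O_T: tree edges away from q, non-tree edges
  counterclockwise around their fundamental cycle.\<close>
definition OT :: "'d pmap \<Rightarrow> 'd set \<Rightarrow> 'd set set \<Rightarrow> 'd set" where
  "OT G q T = {d \<in> darts G.
     (edg G d \<in> T \<and> (\<exists>ds. simple_path G T ds \<and> vert G (hd ds) = q \<and> last ds = d)) \<or>
     (edg G d \<notin> T \<and> (\<exists>ds. dcycle G (insert (edg G d) T) ds \<and> d \<in> set ds \<and> ccw_cycle G ds))}"

text \<open>White vertices: edges of G. Half-edges of G^+: (d, True) is the half of the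
  edge edg d between w_(edg d) and the tail vert d of d; (d, False) is the half
  of the dual edge (edg d)^* lying on the right side of d, between
  w_(edg d) and the face rface d.\<close>

type_synonym 'd hedge = "'d \<times> bool"

definition white_vs :: "'d pmap \<Rightarrow> 'd set set" where
  "white_vs G = edges G"

definition black_vs :: "'d pmap \<Rightarrow> 'd set \<Rightarrow> ('d set + 'd set) set" where
  "black_vs G q = Inl ` (verts G - {q}) \<union> Inr ` (faces G - {outer_face G})"

definition hedges :: "'d pmap \<Rightarrow> 'd set \<Rightarrow> 'd hedge set" where
  "hedges G q = {(d, True) | d. d \<in> darts G \<and> vert G d \<noteq> q} \<union>
                {(d, False) | d. d \<in> darts G \<and> rface G d \<noteq> outer_face G}"

definition white_end :: "'d pmap \<Rightarrow> 'd hedge \<Rightarrow> 'd set" where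
  "white_end G h = edg G (fst h)"

definition black_end :: "'d pmap \<Rightarrow> 'd hedge \<Rightarrow> 'd set + 'd set" where
  "black_end G h = (if snd h then Inl (vert G (fst h)) else Inr (rface G (fst h)))"

text \<open>Induced orientation: h is positively oriented (white to black) in O-hat.
  Primal half-edge (d,True): the O-direction of edg d has its head at vert d.
  Dual half-edge (d,False): e^* is oriented as the 90 degree counterclockwise
  rotation of the O-direction o of e, i.e. from the right side of o to the left
  side of o; the half on the right side of d points towards its black end iff the
  right side of d is the left side of o, i.e. o = alpha d.\<close>
definition pos :: "'d pmap \<Rightarrow> 'd set \<Rightarrow> 'd hedge \<Rightarrow> bool" where
  "pos G Or h = (if snd h
     then (\<exists>od \<in> Or. edg G od = edg G (fst h) \<and> vert G (alpha G od) = vert G (fst h))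
     else alpha G (fst h) \<in> Or)"

text \<open>Kasteleyn cokernel: r_b and the principal subgroup (integer combinations
  of the finitely many r_b). Elements of Z^W are functions 'd set \<Rightarrow> int.\<close>
definition r_vec :: "'d pmap \<Rightarrow> 'd set \<Rightarrow> 'd set \<Rightarrow> ('d set + 'd set) \<Rightarrow> 'd set \<Rightarrow> int" where
  "r_vec G q Or b w =
     int (card {h \<in> hedges G q. white_end G h = w \<and> black_end G h = b \<and> pos G Or h})
   - int (card {h \<in> hedges G q. white_end G h = w \<and> black_end G h = b \<and> \<not> pos G Or h})"

definition Prin :: "'d pmap \<Rightarrow> 'd set \<Rightarrow> 'd set \<Rightarrow> ('d set \<Rightarrow> int) set" where
  "Prin G q Or = {x. \<exists>c :: ('d set + 'd set) \<Rightarrow> int.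
                    x = (\<lambda>w. \<Sum>b \<in> black_vs G q. c b * r_vec G q Or b w)}"

text \<open>equality of classes in K(G^+) = Z^W / Prin(G^+)\<close>
definition same_class :: "'d pmap \<Rightarrow> 'd set \<Rightarrow> 'd set \<Rightarrow> ('d set \<Rightarrow> int) \<Rightarrow> ('d set \<Rightarrow> int) \<Rightarrow> bool" where
  "same_class G q Or x y \<longleftrightarrow> (\<lambda>w. x w - y w) \<in> Prin G q Or"

definition temperley :: "'d pmap \<Rightarrow> 'd set \<Rightarrow> 'd set set \<Rightarrow> 'd hedge set" where
  "temperley G q T =
     {h \<in> hedges G q. snd h \<and> edg G (fst h) \<in> T \<and> pos G (OT G q T) h} \<union>
     {h \<in> hedges G q. \<not> snd h \<and> edg G (fst h) \<notin> T \<and> pos G (OT G q T) h}"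

definition psi_div :: "'d pmap \<Rightarrow> 'd set \<Rightarrow> 'd set \<Rightarrow> 'd hedge set \<Rightarrow> 'd hedge set \<Rightarrow> 'd set \<Rightarrow> int" where
  "psi_div G q O0 M0 M w =
     (if w \<in> white_vs G \<and>
         (\<exists>h1 \<in> M0 - M \<union> (M - M0). \<exists>h2 \<in> M0 - M \<union> (M - M0). h1 \<noteq> h2 \<and>
            white_end G h1 = w \<and> white_end G h2 = w \<and> pos G O0 h1 \<noteq> pos G O0 h2)
      then 1 else 0)"

end

theory Submission
  imports Defs
begin


lemma perm_funpow_in: "perm_on A f \<Longrightarrow> x \<in> A \<Longrightarrow> (f ^^ n) x \<in> A"
  unfolding perm_on_def by (induction n) (auto simp: bij_betw_def)

lemma perm_return:
  assumes "finite A" "perm_on A f" "x \<in> A"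
  shows "\<exists>n>0. (f ^^ n) x = x"
proof -
  let ?g = "\<lambda>n. (f ^^ n) x"
  have sub: "?g ` {0..card A} \<subseteq> A" using perm_funpow_in[OF assms(2,3)] by auto
  have "card (?g ` {0..card A}) \<le> card A" using card_mono[OF assms(1) sub] .
  hence "card (?g ` {0..card A}) < card {0..card A}" by simp
  hence "\<not> inj_on ?g {0..card A}" using pigeonhole by blast
  then obtain i j where ij0: "i \<noteq> j" "?g i = ?g j"
    unfolding inj_on_def by blast
  obtain i j where ij: "i < j" "(f ^^ i) x = (f ^^ j) x"
  proof (cases "i < j")
    case True thus ?thesis using that ij0 by blast
  next
    case False hence "j < i" using ij0 by simp
    thus ?thesis using that ij0 by metis
  qed
  have bi: "bij_betw (f ^^ i) A A" using assms(2) bij_betw_funpow unfolding perm_on_def by (auto intro: bij_betw_funpow)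
  have jj: "j = (j - i) + i" using ij by simp
  have "(f ^^ i) ((f ^^ (j - i)) x) = (f ^^ (i + (j - i))) x"
    by (simp only: funpow_add comp_apply)
  hence "(f ^^ i) ((f ^^ (j - i)) x) = (f ^^ j) x" using ij by simp
  hence eq: "(f ^^ i) ((f ^^ (j - i)) x) = (f ^^ i) x" using ij by simp
  have "(f ^^ (j - i)) x \<in> A" using perm_funpow_in[OF assms(2,3)] by simp
  hence "(f ^^ (j - i)) x = x" using eq bi assms(3)
    unfolding bij_betw_def inj_on_def by blast
  thus ?thesis using ij by (intro exI[of _ "j-i"]) auto
qed

lemma funpow_mod:
  assumes "(f ^^ p) y = y"
  shows "(f ^^ m) y = (f ^^ (m mod p)) y"
proof -
  have kp: "(f ^^ (k * p)) y = y" for k by (induction k) (auto simp: funpow_add assms)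
  have "(f ^^ (m mod p + (m div p) * p)) y = (f ^^ (m mod p)) ((f ^^ ((m div p) * p)) y)"
    by (simp only: funpow_add comp_apply)
  also have "\<dots> = (f ^^ (m mod p)) y" using kp by simp
  finally show ?thesis by (simp add: mod_div_mult_eq)
qed

lemma orb_self: "x \<in> orb f x"
  unfolding orb_def by (auto intro: exI[of _ 0])

lemma orb_sym:
  assumes "finite A" "perm_on A f" "x \<in> A" "y \<in> orb f x"
  shows "x \<in> orb f y"
proof -
  obtain m where m: "y = (f ^^ m) x" using assms(4) unfolding orb_def by auto
  obtain n where n: "n > 0" "(f ^^ n) x = x" using perm_return[OF assms(1-3)] by blast
  have "(f ^^ (m * n)) x = x" using n(2) by (induction m) (auto simp: funpow_add)
  have "(f ^^ (m * n - m)) y = (f ^^ (m*n - m + m)) x" by (simp add: m funpow_add)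
  also have "m * n - m + m = m * n" using n(1) by (simp add: mult_le_mono)
  finally show ?thesis using \<open>(f ^^ (m * n)) x = x\<close> unfolding orb_def by auto
qed

lemma orb_trans: "y \<in> orb f x \<Longrightarrow> z \<in> orb f y \<Longrightarrow> z \<in> orb f x"
proof -
  assume "y \<in> orb f x" "z \<in> orb f y"
  then obtain m n where "y = (f ^^ m) x" "z = (f ^^ n) y" unfolding orb_def by auto
  hence "z = (f ^^ (n + m)) x" by (simp add: funpow_add)
  thus ?thesis unfolding orb_def by blast
qed

lemma orb_eq:
  assumes "finite A" "perm_on A f" "x \<in> A" "y \<in> orb f x"
  shows "orb f y = orb f x"
proof
  show "orb f y \<subseteq> orb f x" using assms(4) orb_trans[of y f x] by blast
  show "orb f x \<subseteq> orb f y" using orb_sym[OF assms] orb_trans[of x f y] by blast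
qed

lemma orb_subset: "perm_on A f \<Longrightarrow> x \<in> A \<Longrightarrow> orb f x \<subseteq> A"
  unfolding orb_def using perm_funpow_in[of A f x] by auto

lemma orb_step: "f x \<in> orb f x"
  unfolding orb_def by (auto intro: exI[of _ 1])


locale pg =
  fixes G :: "'d pmap"
  assumes pg: "plane_graph G"
begin

abbreviation "D \<equiv> darts G"
abbreviation "al \<equiv> alpha G"
abbreviation "sg \<equiv> sigma G"

lemma finD: "finite D" using pg unfolding plane_graph_def by simp
lemma al_perm: "perm_on D al" using pg unfolding plane_graph_def by simp
lemma sg_perm: "perm_on D sg" using pg unfolding plane_graph_def by simp
lemma al_in[simp]: "x \<in> D \<Longrightarrow> al x \<in> D"
  using al_perm unfolding perm_on_def bij_betw_def by auto
lemma sg_in[simp]: "x \<in> D \<Longrightarrow> sg x \<in> D"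
  using sg_perm unfolding perm_on_def bij_betw_def by auto
lemma al_al[simp]: "x \<in> D \<Longrightarrow> al (al x) = x"
  using pg unfolding plane_graph_def by simp
lemma al_neq: "x \<in> D \<Longrightarrow> al x \<noteq> x"
  using pg unfolding plane_graph_def by simp
lemma vert_al_neq: "x \<in> D \<Longrightarrow> vert G (al x) \<noteq> vert G x"
  using pg unfolding plane_graph_def by simp
lemma outer_in: "outer_dart G \<in> D" using pg unfolding plane_graph_def by simp

lemma phi_perm: "perm_on D (phi G)"
proof -
  have "bij_betw (sg \<circ> al) D D" using al_perm sg_perm unfolding perm_on_def
    by (auto intro: bij_betw_trans)
  moreover have "\<forall>x. x \<notin> D \<longrightarrow> (sg \<circ> al) x = x" using al_perm sg_perm unfolding perm_on_def by simp
  ultimately show ?thesis unfolding perm_on_def phi_def by simp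
qed

lemma phi_in[simp]: "x \<in> D \<Longrightarrow> phi G x \<in> D" unfolding phi_def by simp

lemma vert_eq_iff: "x \<in> D \<Longrightarrow> vert G x = vert G y \<longleftrightarrow> y \<in> vert G x"
  unfolding vert_def
proof
  assume "orb sg x = orb sg y"
  thus "y \<in> orb sg x" using orb_self[of y sg] by simp
next
  assume "x \<in> D" "y \<in> orb sg x"
  from orb_eq[OF finD sg_perm this] show "orb sg x = orb sg y" by simp
qed

lemma vert_sg[simp]: "x \<in> D \<Longrightarrow> vert G (sg x) = vert G x"
  unfolding vert_def using orb_eq[OF finD sg_perm, of x "sg x"] orb_step[of sg x] by simp

lemma rface_eq_iff: "x \<in> D \<Longrightarrow> rface G x = rface G y \<longleftrightarrow> y \<in> rface G x"
  unfolding rface_def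
proof
  assume "orb (phi G) x = orb (phi G) y"
  thus "y \<in> orb (phi G) x" using orb_self[of y "phi G"] by simp
next
  assume "x \<in> D" "y \<in> orb (phi G) x"
  from orb_eq[OF finD phi_perm this] show "orb (phi G) x = orb (phi G) y" by simp
qed

lemma rface_phi[simp]: "x \<in> D \<Longrightarrow> rface G (phi G x) = rface G x"
  unfolding rface_def using orb_eq[OF finD phi_perm, of x "phi G x"] orb_step[of "phi G" x] by simp

lemma rface_sg: "x \<in> D \<Longrightarrow> rface G (sg x) = rface G (al x)"
proof -
  assume x: "x \<in> D"
  have "phi G (al x) = sg x" using x unfolding phi_def by simp
  thus ?thesis using rface_phi[of "al x"] x by simp
qed

lemma lface_eq: "x \<in> D \<Longrightarrow> lface G x = rface G (sg x)"
  unfolding lface_def using rface_sg by simp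

lemma edg_eq_iff: "x \<in> D \<Longrightarrow> y \<in> D \<Longrightarrow> edg G x = edg G y \<longleftrightarrow> y = x \<or> y = al x"
proof -
  assume x: "x \<in> D" and y: "y \<in> D"
  show ?thesis
  proof
    assume "edg G x = edg G y"
    hence "y \<in> {x, al x}" unfolding edg_def by auto
    thus "y = x \<or> y = al x" by auto
  next
    assume "y = x \<or> y = al x"
    thus "edg G x = edg G y" using x unfolding edg_def by auto
  qed
qed

lemma edg_al[simp]: "x \<in> D \<Longrightarrow> edg G (al x) = edg G x"
  unfolding edg_def by auto

lemma in_edg: "x \<in> edg G x" "al x \<in> edg G x" unfolding edg_def by auto

lemma vert_in_verts: "x \<in> D \<Longrightarrow> vert G x \<in> verts G" unfolding verts_def by simp
lemma edg_in_edges: "x \<in> D \<Longrightarrow> edg G x \<in> edges G" unfolding edges_def by simp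
lemma rface_in_faces: "x \<in> D \<Longrightarrow> rface G x \<in> faces G" unfolding faces_def by simp
lemma lface_in_faces: "x \<in> D \<Longrightarrow> lface G x \<in> faces G" unfolding lface_def faces_def by simp

end


context pg begin

lemma walk_Cons:
  "walk_in G S (x # p) \<longleftrightarrow> x \<in> D \<and> edg G x \<in> S \<and>
     (p = [] \<or> (walk_in G S p \<and> vert G (al x) = vert G (hd p)))"
proof
  assume w: "walk_in G S (x # p)"
  hence a: "x \<in> D \<and> edg G x \<in> S" unfolding walk_in_def by simp
  show "x \<in> D \<and> edg G x \<in> S \<and> (p = [] \<or> (walk_in G S p \<and> vert G (al x) = vert G (hd p)))"
  proof (cases p)
    case Nil thus ?thesis using a by simp
  next
    case (Cons y r)
    have "\<forall>i. Suc i < length (x # p) \<longrightarrow> vert G (al ((x # p) ! i)) = vert G ((x # p) ! Suc i)"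
      using w unfolding walk_in_def by blast
    hence "Suc 0 < length (x # p) \<longrightarrow> vert G (al ((x # p) ! 0)) = vert G ((x # p) ! Suc 0)"
      by (rule spec)
    hence 1: "vert G (al x) = vert G (hd p)" using Cons by simp
    have 2: "walk_in G S p"
      unfolding walk_in_def
    proof (intro conjI allI impI)
      show "p \<noteq> []" using Cons by simp
      show "set p \<subseteq> D" using w unfolding walk_in_def by simp
      show "\<forall>d\<in>set p. edg G d \<in> S" using w unfolding walk_in_def by simp
      fix i assume "Suc i < length p"
      hence "Suc (Suc i) < length (x # p)" by simp
      hence "vert G (al ((x#p) ! Suc i)) = vert G ((x#p) ! Suc (Suc i))"
        using w unfolding walk_in_def by blast
      thus "vert G (al (p ! i)) = vert G (p ! Suc i)" by simp
    qed
    show ?thesis using a 1 2 by simp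
  qed
next
  assume a: "x \<in> D \<and> edg G x \<in> S \<and> (p = [] \<or> (walk_in G S p \<and> vert G (al x) = vert G (hd p)))"
  show "walk_in G S (x # p)"
  proof (cases "p = []")
    case True thus ?thesis using a unfolding walk_in_def by simp
  next
    case False
    hence wp: "walk_in G S p" and h: "vert G (al x) = vert G (hd p)" using a by auto
    show ?thesis unfolding walk_in_def
    proof (intro conjI allI impI)
      show "x # p \<noteq> []" by simp
      show "set (x # p) \<subseteq> D" using a wp unfolding walk_in_def by simp
      show "\<forall>d\<in>set (x # p). edg G d \<in> S" using a wp unfolding walk_in_def by simp
      fix i assume i: "Suc i < length (x # p)"
      show "vert G (al ((x # p) ! i)) = vert G ((x # p) ! Suc i)"
      proof (cases i)
        case 0 thus ?thesis using h False by (simp add: hd_conv_nth)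
      next
        case (Suc j) thus ?thesis using wp i unfolding walk_in_def by simp
      qed
    qed
  qed
qed

lemma walk_single[simp]: "walk_in G S [x] \<longleftrightarrow> x \<in> D \<and> edg G x \<in> S"
  using walk_Cons[of S x "[]"] by simp

lemma walk_append:
  assumes "q \<noteq> []" "r \<noteq> []"
  shows "walk_in G S (q @ r) \<longleftrightarrow> walk_in G S q \<and> walk_in G S r \<and> vert G (al (last q)) = vert G (hd r)"
  using assms(1)
proof (induction q)
  case Nil thus ?case by simp
next
  case (Cons x q)
  show ?case
  proof (cases "q = []")
    case True thus ?thesis using walk_Cons[of S x r] assms(2) by auto
  next
    case False
    have "walk_in G S ((x # q) @ r) \<longleftrightarrow> x \<in> D \<and> edg G x \<in> S \<and> walk_in G S (q @ r) \<and> vert G (al x) = vert G (hd q)"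
      using walk_Cons[of S x "q @ r"] False by simp
    also have "\<dots> \<longleftrightarrow> x \<in> D \<and> edg G x \<in> S \<and> walk_in G S q \<and> walk_in G S r \<and> vert G (al (last q)) = vert G (hd r) \<and> vert G (al x) = vert G (hd q)"
      using Cons.IH[OF False] by simp
    also have "\<dots> \<longleftrightarrow> walk_in G S (x # q) \<and> walk_in G S r \<and> vert G (al (last (x # q))) = vert G (hd r)"
      using walk_Cons[of S x q] False by auto
    finally show ?thesis .
  qed
qed

lemma walk_mono: "walk_in G S p \<Longrightarrow> S \<subseteq> S' \<Longrightarrow> walk_in G S' p"
  unfolding walk_in_def by blast

lemma walk_nonempty: "walk_in G S p \<Longrightarrow> p \<noteq> []" unfolding walk_in_def by simp
lemma walk_setD: "walk_in G S p \<Longrightarrow> set p \<subseteq> D" unfolding walk_in_def by simp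
lemma walk_edges: "walk_in G S p \<Longrightarrow> y \<in> set p \<Longrightarrow> edg G y \<in> S" unfolding walk_in_def by simp

lemma pv_Cons: "p \<noteq> [] \<Longrightarrow> path_verts G (x # p) = vert G x # path_verts G p"
  unfolding path_verts_def by simp

lemma pv_single[simp]: "path_verts G [x] = [vert G x, vert G (al x)]"
  unfolding path_verts_def by simp

lemma pv_append: "r \<noteq> [] \<Longrightarrow> path_verts G (q @ r) = map (vert G) q @ path_verts G r"
  unfolding path_verts_def by simp

lemma pv_hd: "p \<noteq> [] \<Longrightarrow> hd (path_verts G p) = vert G (hd p)"
  unfolding path_verts_def by (cases p) auto

lemma pv_last: "last (path_verts G p) = vert G (al (last p))"
  unfolding path_verts_def by simp

lemma pv_length: "length (path_verts G p) = Suc (length p)"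
  unfolding path_verts_def by simp

lemma walk_vert_in:
  assumes "walk_in G S p" "y \<in> set p"
  shows "vert G y \<in> set (map (vert G) p)" "vert G (al y) \<in> set (path_verts G p)"
proof -
  show "vert G y \<in> set (map (vert G) p)" using assms(2) by simp
  show "vert G (al y) \<in> set (path_verts G p)"
    using assms
  proof (induction p)
    case Nil thus ?case by simp
  next
    case (Cons x p)
    show ?case
    proof (cases "p = []")
      case True thus ?thesis using Cons by simp
    next
      case False
      hence wp: "walk_in G S p" and h: "vert G (al x) = vert G (hd p)"
        using Cons.prems(1) walk_Cons by auto
      show ?thesis
      proof (cases "y = x")
        case True
        have "vert G (hd p) \<in> set (path_verts G p)" using pv_hd[OF False] False
          by (metis hd_in_set pv_length length_0_conv nat.distinct(1))
        thus ?thesis using True h pv_Cons[OF False] by simp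
      next
        case f: False
        hence "y \<in> set p" using Cons.prems(2) by simp
        thus ?thesis using Cons.IH[OF wp] pv_Cons[OF False] by simp
      qed
    qed
  qed
qed

lemma simple_Cons:
  assumes "p \<noteq> []"
  shows "simple_path G S (x # p) \<longleftrightarrow> x \<in> D \<and> edg G x \<in> S \<and> simple_path G S p \<and>
           vert G (al x) = vert G (hd p) \<and> vert G x \<notin> set (path_verts G p)"
  unfolding simple_path_def using walk_Cons[of S x p] pv_Cons[OF assms] assms by auto

lemma simple_single[simp]: "simple_path G S [x] \<longleftrightarrow> x \<in> D \<and> edg G x \<in> S"
  unfolding simple_path_def using vert_al_neq by auto

lemma simple_distinct_edges:
  assumes "simple_path G S p"
  shows "distinct (map (edg G) p)"
  using assms
proof (induction p)
  case Nil thus ?case by simp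
next
  case (Cons x p)
  show ?case
  proof (cases "p = []")
    case True thus ?thesis by simp
  next
    case False
    hence sp: "simple_path G S p" and x: "x \<in> D" and nv: "vert G x \<notin> set (path_verts G p)"
      using Cons.prems simple_Cons by auto
    have wp: "walk_in G S p" using sp unfolding simple_path_def by simp
    have "edg G x \<notin> edg G ` set p"
    proof
      assume "edg G x \<in> edg G ` set p"
      then obtain y where y: "y \<in> set p" "edg G y = edg G x" by auto
      have yD: "y \<in> D" using walk_setD[OF wp] y(1) by auto
      have "x = y \<or> x = al y" using edg_eq_iff[OF yD x] y(2) by simp
      thus False
      proof
        assume "x = y"
        thus False using walk_vert_in(1)[OF wp y(1)] nv unfolding path_verts_def by auto
      next
        assume "x = al y"
        hence "vert G (al y) = vert G x" by simp
        thus False using walk_vert_in(2)[OF wp y(1)] nv by simp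
      qed
    qed
    thus ?thesis using Cons.IH[OF sp] by simp
  qed
qed

lemma simple_drop:
  assumes "simple_path G S p" "k < length p"
  shows "simple_path G S (drop k p) \<and> vert G (hd (drop k p)) = path_verts G p ! k \<and>
         last (drop k p) = last p"
  using assms
proof (induction p arbitrary: k)
  case Nil thus ?case by simp
next
  case (Cons x p)
  show ?case
  proof (cases k)
    case 0 thus ?thesis using Cons.prems by (cases p) (auto simp: pv_Cons path_verts_def)
  next
    case (Suc j)
    hence j: "j < length p" and ne: "p \<noteq> []" using Cons.prems by auto
    hence sp: "simple_path G S p" using Cons.prems(1) simple_Cons by auto
    show ?thesis using Cons.IH[OF sp j] Suc pv_Cons[OF ne] ne by simp
  qed
qed

lemma walk_to_simple:
  assumes "walk_in G S p" "vert G (hd p) \<noteq> vert G (al (last p))"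
  shows "\<exists>r. simple_path G S r \<and> vert G (hd r) = vert G (hd p) \<and>
             vert G (al (last r)) = vert G (al (last p)) \<and> set r \<subseteq> set p"
  using assms
proof (induction p)
  case Nil thus ?case by (simp add: walk_in_def)
next
  case (Cons x p)
  have xD: "x \<in> D" and xS: "edg G x \<in> S" using Cons.prems(1) walk_Cons by auto
  show ?case
  proof (cases "p = [] \<or> vert G (al x) = vert G (al (last p))")
    case True
    show ?thesis
      apply (rule exI[of _ "[x]"])
      using True xD xS by auto
  next
    case False
    hence ne: "p \<noteq> []" and mb: "vert G (al x) \<noteq> vert G (al (last p))" by auto
    hence wp: "walk_in G S p" and h: "vert G (al x) = vert G (hd p)"
      using Cons.prems(1) walk_Cons by auto
    obtain r where r: "simple_path G S r" "vert G (hd r) = vert G (hd p)"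
      "vert G (al (last r)) = vert G (al (last p))" "set r \<subseteq> set p"
      using Cons.IH[OF wp] mb h by auto
    have rne: "r \<noteq> []" using r(1) unfolding simple_path_def walk_in_def by simp
    have lastx: "last (x # p) = last p" using ne by simp
    show ?thesis
    proof (cases "vert G x \<in> set (path_verts G r)")
      case False
      have "simple_path G S (x # r)" using simple_Cons[OF rne] r xD xS h False by simp
      thus ?thesis using r lastx rne by (intro exI[of _ "x # r"]) auto
    next
      case True
      then obtain k where k: "k < length (path_verts G r)" "path_verts G r ! k = vert G x"
        by (metis in_set_conv_nth)
      have "k \<noteq> length r"
      proof
        assume "k = length r"
        hence "path_verts G r ! k = last (path_verts G r)"
          by (simp add: path_verts_def nth_append)
        hence "vert G x = vert G (al (last p))" using k(2) pv_last r(3) by simp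
        thus False using Cons.prems(2) lastx by simp
      qed
      hence kl: "k < length r" using k(1) pv_length by (metis less_antisym)
      have d: "simple_path G S (drop k r)" "vert G (hd (drop k r)) = vert G x" "last (drop k r) = last r"
        using simple_drop[OF r(1) kl] k(2) by auto
      have "set (drop k r) \<subseteq> set (x # p)" using r(4) set_drop_subset by fastforce
      thus ?thesis using d r lastx by (intro exI[of _ "drop k r"]) auto
    qed
  qed
qed

end

context pg begin

lemma walk_rev:
  assumes "walk_in G S p"
  shows "walk_in G S (rev (map al p)) \<and> path_verts G (rev (map al p)) = rev (path_verts G p)"
  using assms
proof (induction p)
  case Nil thus ?case by (simp add: walk_in_def)
next
  case (Cons x q)
  have xD: "x \<in> D" and xS: "edg G x \<in> S" using Cons.prems walk_Cons by auto
  show ?case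
  proof (cases "q = []")
    case True thus ?thesis using xD xS by simp
  next
    case False
    have wq: "walk_in G S q" and h: "vert G (al x) = vert G (hd q)"
      using Cons.prems walk_Cons False by auto
    have IH: "walk_in G S (rev (map al q))" "path_verts G (rev (map al q)) = rev (path_verts G q)"
      using Cons.IH[OF wq] by auto
    have qD: "set q \<subseteq> D" using walk_setD[OF wq] .
    have hqD: "hd q \<in> D" using qD False by auto
    have ne: "rev (map al q) \<noteq> []" using False by simp
    have lr: "last (rev (map al q)) = al (hd q)" using False by (simp add: last_rev hd_map)
    have e: "rev (map al (x # q)) = rev (map al q) @ [al x]" by simp
    have w1: "walk_in G S (rev (map al (x # q)))"
      unfolding e using walk_append[OF ne, of "[al x]" S] IH(1) xD xS lr hqD h by simp
    have "path_verts G (rev (map al q)) = map (vert G) (rev (map al q)) @ [vert G (hd q)]"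
      unfolding path_verts_def using lr hqD by simp
    hence pq: "rev (path_verts G q) = map (vert G) (rev (map al q)) @ [vert G (hd q)]" using IH(2) by simp
    have "path_verts G (rev (map al (x # q))) = map (vert G) (rev (map al q)) @ [vert G (al x), vert G x]"
      unfolding e using pv_append[of "[al x]" "rev (map al q)"] xD by simp
    also have "\<dots> = rev (path_verts G q) @ [vert G x]" using pq h by simp
    also have "\<dots> = rev (path_verts G (x # q))" using pv_Cons[OF False] by simp
    finally show ?thesis using w1 by simp
  qed
qed

lemma simple_rev:
  assumes "simple_path G S p"
  shows "simple_path G S (rev (map al p))" "hd (rev (map al p)) = al (last p)"
    "last (rev (map al p)) = al (hd p)"
proof -
  have ne: "p \<noteq> []" using assms unfolding simple_path_def walk_in_def by simp
  have "walk_in G S p" using assms unfolding simple_path_def by simp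
  from walk_rev[OF this] show "simple_path G S (rev (map al p))" using assms unfolding simple_path_def by simp
  show "hd (rev (map al p)) = al (last p)" using ne by (simp add: hd_rev last_map)
  show "last (rev (map al p)) = al (hd p)" using ne by (simp add: last_rev hd_map)
qed

lemma simple_ends:
  assumes "simple_path G S p"
  shows "vert G (hd p) \<noteq> vert G (al (last p))"
proof -
  have ne: "p \<noteq> []" using assms unfolding simple_path_def walk_in_def by simp
  have d: "distinct (path_verts G p)" using assms unfolding simple_path_def by simp
  obtain y r where pr: "p = y # r" using ne by (cases p) auto
  have "path_verts G p = vert G y # map (vert G) r @ [vert G (al (last p))]"
    unfolding path_verts_def pr by simp
  thus ?thesis using d pr by auto
qed

lemma pv_drop: "k < length p \<Longrightarrow> path_verts G (drop k p) = drop k (path_verts G p)"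
  unfolding path_verts_def by (simp add: drop_map)

lemma mk_cycle:
  assumes "simple_path G S R" "x \<in> D" "vert G (al x) = vert G (hd R)"
    "vert G x = vert G (al (last R))" "edg G x \<notin> edg G ` set R"
  shows "dcycle G (insert (edg G x) S) (R @ [x])"
proof -
  have ne: "R \<noteq> []" using assms unfolding simple_path_def walk_in_def by simp
  have wR: "walk_in G (insert (edg G x) S) R"
    using walk_mono assms(1) unfolding simple_path_def by blast
  have w: "walk_in G (insert (edg G x) S) (R @ [x])"
    using walk_append[OF ne, of "[x]"] wR assms(2,4) by simp
  have "path_verts G R = map (vert G) R @ [vert G x]" unfolding path_verts_def using assms(4) by simp
  hence d1: "distinct (map (vert G) (R @ [x]))" using assms(1) unfolding simple_path_def by simp
  have d2: "distinct (map (edg G) (R @ [x]))" using simple_distinct_edges[OF assms(1)] assms(5) by simp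
  show ?thesis unfolding dcycle_def using w d1 d2 ne assms(3) by simp
qed

end

context pg begin

definition adjR :: "'d set set \<Rightarrow> ('d set \<times> 'd set) set" where
  "adjR S = {(vert G x, vert G (al x)) | x. x \<in> D \<and> edg G x \<in> S}"

lemma adjR_sym: "sym (adjR S)"
  unfolding sym_def adjR_def
proof (intro allI impI)
  fix a b assume "(a, b) \<in> {(vert G x, vert G (al x)) |x. x \<in> D \<and> edg G x \<in> S}"
  then obtain x where x: "a = vert G x" "b = vert G (al x)" "x \<in> D" "edg G x \<in> S" by auto
  hence "b = vert G (al x) \<and> a = vert G (al (al x)) \<and> al x \<in> D \<and> edg G (al x) \<in> S" by simp
  thus "(b, a) \<in> {(vert G x, vert G (al x)) |x. x \<in> D \<and> edg G x \<in> S}" by blast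
qed

lemma adjR_rtrancl_sym: "(a, b) \<in> (adjR S)\<^sup>* \<Longrightarrow> (b, a) \<in> (adjR S)\<^sup>*"
  using sym_rtrancl[OF adjR_sym] unfolding sym_def by blast

lemma walk_rtrancl: "walk_in G S p \<Longrightarrow> (vert G (hd p), vert G (al (last p))) \<in> (adjR S)\<^sup>*"
proof (induction p)
  case Nil thus ?case by (simp add: walk_in_def)
next
  case (Cons x p)
  have xD: "x \<in> D" and xS: "edg G x \<in> S" using Cons.prems walk_Cons by auto
  have st: "(vert G x, vert G (al x)) \<in> adjR S" unfolding adjR_def using xD xS by blast
  show ?case
  proof (cases "p = []")
    case True thus ?thesis using st by simp
  next
    case False
    hence "walk_in G S p" "vert G (al x) = vert G (hd p)" using Cons.prems walk_Cons by auto
    hence "(vert G (al x), vert G (al (last p))) \<in> (adjR S)\<^sup>*" using Cons.IH by simp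
    thus ?thesis using st False by (simp add: converse_rtrancl_into_rtrancl)
  qed
qed

lemma rtrancl_walk:
  assumes "(a, b) \<in> (adjR S)\<^sup>*"
  shows "a = b \<or> (\<exists>p. walk_in G S p \<and> vert G (hd p) = a \<and> vert G (al (last p)) = b)"
  using assms
proof (induction rule: converse_rtrancl_induct)
  case base thus ?case by simp
next
  case (step a c)
  then obtain x where x: "a = vert G x" "c = vert G (al x)" "x \<in> D" "edg G x \<in> S"
    unfolding adjR_def by blast
  show ?case
  proof (cases "c = b")
    case True thus ?thesis using x by (intro disjI2 exI[of _ "[x]"]) simp
  next
    case False
    then obtain p where p: "walk_in G S p" "vert G (hd p) = c" "vert G (al (last p)) = b"
      using step.IH by auto
    have ne: "p \<noteq> []" using p(1) walk_nonempty by blast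
    have "walk_in G S (x # p)" using walk_Cons[of S x p] x p by simp
    thus ?thesis using x p ne by (intro disjI2 exI[of _ "x # p"]) simp
  qed
qed

lemma rtrancl_simple:
  assumes "(a, b) \<in> (adjR S)\<^sup>*" "a \<noteq> b"
  shows "\<exists>p. simple_path G S p \<and> vert G (hd p) = a \<and> vert G (al (last p)) = b"
proof -
  obtain p where p: "walk_in G S p" "vert G (hd p) = a" "vert G (al (last p)) = b"
    using rtrancl_walk[OF assms(1)] assms(2) by blast
  show ?thesis using walk_to_simple[OF p(1)] p assms(2) by auto
qed

lemma joined_rtrancl: "joined_in G S u v \<Longrightarrow> (u, v) \<in> (adjR S)\<^sup>*"
  unfolding joined_in_def simple_path_def using walk_rtrancl by blast

lemma walk_restrict:
  assumes "walk_in G S p" "\<forall>y \<in> set p. edg G y \<notin> X"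
  shows "walk_in G (S - X) p"
  using assms unfolding walk_in_def by blast

end

context pg begin

definition TP :: "'d set \<Rightarrow> 'd set set \<Rightarrow> 'd \<Rightarrow> bool" where
  "TP q T x \<longleftrightarrow> (\<exists>ds. simple_path G T ds \<and> vert G (hd ds) = q \<and> last ds = x)"

lemma distinct_hd_drop: "distinct xs \<Longrightarrow> xs \<noteq> [] \<Longrightarrow> 0 < k \<Longrightarrow> hd xs \<notin> set (drop k xs)"
proof -
  assume a: "distinct xs" "xs \<noteq> []" "0 < k"
  then obtain y ys where xs: "xs = y # ys" by (cases xs) auto
  obtain j where j: "k = Suc j" using a(3) by (cases k) auto
  have "set (drop k xs) \<subseteq> set ys" unfolding xs j by (simp add: set_drop_subset)
  thus ?thesis using a(1) xs by auto
qed

lemma TP_rev: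
  assumes "simple_path G T P" "vert G (al (last P)) = q"
  shows "TP q T (al (hd P))"
proof -
  have ne: "P \<noteq> []" using assms unfolding simple_path_def walk_in_def by simp
  have hD: "last P \<in> D" using assms ne unfolding simple_path_def walk_in_def by auto
  show ?thesis unfolding TP_def
    using simple_rev[OF assms(1)] assms(2) by (intro exI[of _ "rev (map al P)"]) simp
qed

lemma tree_TP_exists:
  assumes T: "spanning_tree G T" and d0: "d0 \<in> D" "edg G d0 \<in> T" and q: "q \<in> verts G"
  shows "TP q T d0 \<or> TP q T (al d0)"
proof -
  define u where "u = vert G d0"
  define v where "v = vert G (al d0)"
  have uv: "u \<noteq> v" unfolding u_def v_def using vert_al_neq[OF d0(1)] by simp
  have a0T: "edg G (al d0) \<in> T" using d0 by simp
  show ?thesis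
  proof (cases "u = q \<or> v = q")
    case True
    thus ?thesis
    proof
      assume "u = q" thus ?thesis unfolding TP_def u_def using d0
        by (intro disjI1 exI[of _ "[d0]"]) simp
    next
      assume "v = q" thus ?thesis unfolding TP_def v_def using d0
        by (intro disjI2 exI[of _ "[al d0]"]) simp
    qed
  next
    case False
    have "joined_in G T v q" using T q vert_in_verts[OF al_in[OF d0(1)]]
      unfolding spanning_tree_def v_def by blast
    then obtain R where R: "simple_path G T R" "vert G (hd R) = v" "vert G (al (last R)) = q"
      using False unfolding joined_in_def by auto
    have Rne: "R \<noteq> []" using R(1) unfolding simple_path_def walk_in_def by simp
    show ?thesis
    proof (cases "u \<in> set (path_verts G R)")
      case False
      have "simple_path G T (d0 # R)" using simple_Cons[OF Rne] R d0 False
        unfolding u_def v_def by simp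
      from TP_rev[OF this] R(3) Rne show ?thesis by simp
    next
      case True
      then obtain k where k: "k < length (path_verts G R)" "path_verts G R ! k = u"
        by (metis in_set_conv_nth)
      have dist: "distinct (path_verts G R)" using R(1) unfolding simple_path_def by simp
      have k0: "k \<noteq> 0"
      proof
        assume "k = 0"
        hence "u = hd (path_verts G R)" using k(2) by (simp add: hd_conv_nth path_verts_def)
        thus False using pv_hd[OF Rne] R(2) uv by simp
      qed
      have kl: "k \<noteq> length R"
      proof
        assume "k = length R"
        hence "u = last (path_verts G R)" using k(2) by (simp add: path_verts_def nth_append)
        thus False using pv_last R(3) False by simp
      qed
      hence kl': "k < length R" using k(1) pv_length by (metis less_antisym)
      have sd: "simple_path G T (drop k R)" "vert G (hd (drop k R)) = u" "last (drop k R) = last R"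
        using simple_drop[OF R(1) kl'] k(2) by auto
      have "v \<notin> set (drop k (path_verts G R))"
        using distinct_hd_drop[OF dist] k0 pv_hd[OF Rne] R(2) Rne unfolding path_verts_def by auto
      hence vn: "v \<notin> set (path_verts G (drop k R))" using pv_drop[OF kl'] by simp
      have dne: "drop k R \<noteq> []" using kl' by simp
      have "simple_path G T (al d0 # drop k R)" using simple_Cons[OF dne] sd d0 a0T vn
        unfolding u_def v_def by simp
      from TP_rev[OF this] R(3) sd(3) dne d0(1) show ?thesis by simp
    qed
  qed
qed

lemma tree_TP_unique:
  assumes T: "spanning_tree G T" and d0: "d0 \<in> D" "edg G d0 \<in> T"
    and t1: "TP q T d0" and t2: "TP q T (al d0)"
  shows False
proof -
  define u where "u = vert G d0"
  define v where "v = vert G (al d0)"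
  define w where "w = edg G d0"
  have uv: "u \<noteq> v" unfolding u_def v_def using vert_al_neq[OF d0(1)] by simp
  have a0D: "al d0 \<in> D" using d0 by simp
  have half: "(vert G x, q) \<in> (adjR (T - {w}))\<^sup>*"
    if x: "x \<in> {d0, al d0}" and tp: "TP q T x" for x
  proof -
    have xD: "x \<in> D" using x d0 by auto
    obtain P where P: "simple_path G T P" "vert G (hd P) = q" "last P = x"
      using tp unfolding TP_def by auto
    have Pne: "P \<noteq> []" using P(1) unfolding simple_path_def walk_in_def by simp
    have A: "simple_path G T (rev (map al P))" "hd (rev (map al P)) = al x"
      "last (rev (map al P)) = al (hd P)"
      using simple_rev[OF P(1)] P(3) by auto
    have hPD: "hd P \<in> D" using P(1) Pne unfolding simple_path_def walk_in_def by auto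
    define R where "R = tl (rev (map al P))"
    have AR: "rev (map al P) = al x # R" using A(2) Pne unfolding R_def
      by (metis Nil_is_map_conv Nil_is_rev_conv list.collapse)
    show ?thesis
    proof (cases "R = []")
      case True
      hence "al x = al (hd P)" using A(3) AR by simp
      hence "vert G (al (al x)) = q" using P(2) hPD xD by simp
      hence "vert G x = q" using xD by simp
      thus ?thesis by simp
    next
      case False
      have sR: "simple_path G T R" and hR: "vert G (al (al x)) = vert G (hd R)"
        and nx: "vert G (al x) \<notin> set (path_verts G R)"
        using simple_Cons[OF False, of T "al x"] A(1) AR by auto
      have lR: "vert G (al (last R)) = q" using A(3) AR False hPD P(2) by simp
      have wR: "walk_in G T R" using sR unfolding simple_path_def by simp
      have avoid: "\<forall>y \<in> set R. edg G y \<notin> {w}"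
      proof
        fix y assume y: "y \<in> set R"
        have yD: "y \<in> D" using walk_setD[OF wR] y by auto
        show "edg G y \<notin> {w}"
        proof
          assume "edg G y \<in> {w}"
          hence "edg G d0 = edg G y" unfolding w_def by simp
          hence "y = d0 \<or> y = al d0" using edg_eq_iff[OF d0(1) yD] by simp
          hence "y = x \<or> y = al x" using x d0(1) by auto
          thus False
          proof
            assume "y = x"
            hence "vert G (al y) = vert G (al x)" by simp
            thus False using walk_vert_in(2)[OF wR y] nx by simp
          next
            assume "y = al x"
            thus False using walk_vert_in(1)[OF wR y] nx unfolding path_verts_def by auto
          qed
        qed
      qed
      have "walk_in G (T - {w}) R" using walk_restrict[OF wR avoid] .
      from walk_rtrancl[OF this] show ?thesis using hR lR xD by simp
    qed
  qed
  have h2: "(u, q) \<in> (adjR (T - {w}))\<^sup>*" using half[of d0] t1 unfolding u_def by simp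
  have h1: "(v, q) \<in> (adjR (T - {w}))\<^sup>*" using half[of "al d0"] t2 d0 unfolding v_def by simp
  have "(u, v) \<in> (adjR (T - {w}))\<^sup>*" using h2 adjR_rtrancl_sym[OF h1] by simp
  then obtain R where R: "simple_path G (T - {w}) R" "vert G (hd R) = u" "vert G (al (last R)) = v"
    using rtrancl_simple uv by blast
  have wR: "walk_in G (T - {w}) R" using R(1) unfolding simple_path_def by simp
  have "edg G (al d0) \<notin> edg G ` set R" using walk_edges[OF wR] d0 unfolding w_def by auto
  hence "dcycle G (insert (edg G (al d0)) (T - {w})) (R @ [al d0])"
    using mk_cycle[OF R(1) a0D] R(2,3) d0 unfolding u_def v_def by simp
  moreover have "insert (edg G (al d0)) (T - {w}) = T" using d0 unfolding w_def by auto
  ultimately show False using T unfolding spanning_tree_def by metis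
qed

end

context pg begin

definition dv :: "'d set set \<Rightarrow> 'd set \<Rightarrow> 'd set" where
  "dv X v = {x \<in> D. vert G x = v \<and> edg G x \<in> X}"

definition even_set :: "'d set set \<Rightarrow> bool" where
  "even_set X \<longleftrightarrow> (\<forall>v. even (card (dv X v)))"

lemma fin_dv: "finite (dv X v)" unfolding dv_def using finD by simp

lemma heads:
  "walk_in G S p \<Longrightarrow> map (\<lambda>x. vert G (al x)) p = tl (path_verts G p)"
proof (induction p)
  case Nil thus ?case by (simp add: walk_in_def)
next
  case (Cons x q)
  show ?case
  proof (cases "q = []")
    case True thus ?thesis by simp
  next
    case False
    hence wq: "walk_in G S q" and h: "vert G (al x) = vert G (hd q)" using Cons.prems walk_Cons by auto
    have "path_verts G q = vert G (hd q) # tl (path_verts G q)"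
      using pv_hd[OF False] pv_length[of q] by (metis list.collapse list.size(3) nat.distinct(1))
    thus ?thesis using Cons.IH[OF wq] pv_Cons[OF False] h by simp
  qed
qed

lemma pv_nth_Suc:
  assumes "walk_in G S p" "j < length p"
  shows "path_verts G p ! Suc j = vert G (al (p ! j))"
proof -
  have "tl (path_verts G p) ! j = vert G (al (p ! j))"
    using heads[OF assms(1)] assms(2) by (metis nth_map)
  moreover have "j < length (tl (path_verts G p))" using assms(2) pv_length[of p] by simp
  ultimately show ?thesis by (simp add: nth_tl)
qed

lemma pv_in_verts:
  assumes "walk_in G S p"
  shows "set (path_verts G p) \<subseteq> verts G"
proof -
  have ne: "p \<noteq> []" and pD: "set p \<subseteq> D" using assms unfolding walk_in_def by auto
  have "last p \<in> D" using ne pD by auto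
  thus ?thesis unfolding path_verts_def using pD vert_in_verts by auto
qed

lemma finite_verts: "finite (verts G)" unfolding verts_def using finD by simp
lemma finite_edges: "finite (edges G)" unfolding edges_def using finD by simp
lemma finite_faces: "finite (faces G)" unfolding faces_def using finD by simp

lemma dcycle_mono: "dcycle G S ds \<Longrightarrow> S \<subseteq> S' \<Longrightarrow> dcycle G S' ds"
  unfolding dcycle_def using walk_mono by blast

lemma even_cycle_exists:
  assumes X: "X \<subseteq> edges G" "X \<noteq> {}" "even_set X"
  shows "\<exists>ds. dcycle G X ds"
proof -
  obtain e where e: "e \<in> X" using X(2) by auto
  then obtain x0 where x0: "x0 \<in> D" "edg G x0 = e" using X(1) unfolding edges_def by auto
  have P0: "simple_path G X [x0]" using x0 e by simp
  have bound: "\<forall>p. simple_path G X p \<longrightarrow> length p < card (verts G)"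
  proof (intro allI impI)
    fix p assume sp: "simple_path G X p"
    have "card (set (path_verts G p)) = Suc (length p)"
      using sp unfolding simple_path_def by (simp add: distinct_card pv_length)
    moreover have "card (set (path_verts G p)) \<le> card (verts G)"
    proof -
      have "set (path_verts G p) \<subseteq> verts G" using pv_in_verts[of X p] sp unfolding simple_path_def by simp
      from card_mono[OF finite_verts this] show ?thesis .
    qed
    ultimately show "length p < card (verts G)" by simp
  qed
  obtain p where p: "simple_path G X p" and mx: "\<forall>p'. simple_path G X p' \<longrightarrow> length p' \<le> length p"
    using ex_has_greatest_nat[of "simple_path G X" "[x0]" length "card (verts G)"] P0 bound by blast
  have wp: "walk_in G X p" and dp: "distinct (path_verts G p)" using p unfolding simple_path_def by auto
  have ne: "p \<noteq> []" using walk_nonempty[OF wp] .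
  define L where "L = last p"
  define v where "v = vert G (al L)"
  have LD: "L \<in> D" using walk_setD[OF wp] ne unfolding L_def by auto
  have LX: "edg G L \<in> X" using walk_edges[OF wp] ne unfolding L_def by auto
  have aL: "al L \<in> dv X v" unfolding dv_def v_def using LD LX by simp
  have "\<exists>y \<in> dv X v. y \<noteq> al L"
  proof (rule ccontr)
    assume "\<not> ?thesis"
    hence "\<forall>y \<in> dv X v. y = al L" by simp
    hence "dv X v = {al L}" using aL by blast
    hence "card (dv X v) = 1" by simp
    moreover have "even (card (dv X v))" using X(3) unfolding even_set_def by simp
    ultimately show False by simp
  qed
  then obtain y where y: "y \<in> D" "vert G y = v" "edg G y \<in> X" "y \<noteq> al L" unfolding dv_def by auto
  have pvp: "path_verts G p = map (vert G) p @ [v]" unfolding path_verts_def v_def L_def by simp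
  have lenpv: "path_verts G p ! length p = v" using pvp by (simp add: nth_append)
  have ny: "edg G y \<notin> edg G ` set p"
  proof
    assume "edg G y \<in> edg G ` set p"
    then obtain z where z: "z \<in> set p" "edg G z = edg G y" by auto
    have zD: "z \<in> D" using walk_setD[OF wp] z(1) by auto
    have "y = z \<or> y = al z" using edg_eq_iff[OF zD y(1)] z(2) by simp
    thus False
    proof
      assume "y = z"
      hence "v \<in> set (map (vert G) p)" using z(1) y(2) by auto
      thus False using dp pvp by simp
    next
      assume yz: "y = al z"
      obtain j where j: "j < length p" "p ! j = z" using z(1) by (metis in_set_conv_nth)
      have "path_verts G p ! Suc j = v" using pv_nth_Suc[OF wp j(1)] j(2) yz y(2) by simp
      hence "path_verts G p ! Suc j = path_verts G p ! length p" using lenpv by simp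
      hence "Suc j = length p" using nth_eq_iff_index_eq[OF dp, of "Suc j" "length p"] pv_length[of p] j(1) by simp
      hence "j = length p - 1" by simp
      hence "z = L" using j ne unfolding L_def by (simp add: last_conv_nth)
      thus False using yz y(4) by simp
    qed
  qed
  show ?thesis
  proof (cases "vert G (al y) \<in> set (path_verts G p)")
    case False
    have w2: "walk_in G X (p @ [y])" using walk_append[OF ne, of "[y]"] wp y LD unfolding v_def L_def by simp
    have "path_verts G (p @ [y]) = path_verts G p @ [vert G (al y)]"
      using pv_append[of "[y]" p] pvp y(2) by simp
    hence "simple_path G X (p @ [y])" using w2 dp False unfolding simple_path_def by simp
    thus ?thesis using mx by fastforce
  next
    case True
    then obtain i where i: "i < length (path_verts G p)" "path_verts G p ! i = vert G (al y)"
      by (metis in_set_conv_nth)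
    have "i \<noteq> length p"
    proof
      assume "i = length p"
      hence "vert G (al y) = vert G y" using i(2) lenpv y(2) by simp
      thus False using vert_al_neq[OF y(1)] by simp
    qed
    hence il: "i < length p" using i(1) pv_length by (metis less_antisym)
    have sd: "simple_path G X (drop i p)" "vert G (hd (drop i p)) = path_verts G p ! i" "last (drop i p) = last p"
      using simple_drop[OF p il] by auto
    have "edg G y \<notin> edg G ` set (drop i p)" using ny set_drop_subset by fastforce
    hence "dcycle G (insert (edg G y) X) (drop i p @ [y])"
      using mk_cycle[OF sd(1) y(1)] sd i(2) y(2) unfolding v_def L_def by simp
    thus ?thesis using y(3) by (metis insert_absorb)
  qed
qed

lemma card_filter_inj:
  assumes "inj_on f A"
  shows "card {x \<in> A. f x = v} = (if v \<in> f ` A then 1 else 0)"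
proof (cases "v \<in> f ` A")
  case True
  then obtain a where a: "a \<in> A" "f a = v" by auto
  have "{x \<in> A. f x = v} = {a}" using a assms unfolding inj_on_def by auto
  thus ?thesis using True by simp
next
  case False
  hence e: "{x \<in> A. f x = v} = {}" by auto
  show ?thesis using False by (simp only: e card.empty) simp
qed

lemma al_inj: "inj_on al D"
  unfolding inj_on_def by (metis al_al)

lemma cycle_even:
  assumes c: "dcycle G S ds"
  shows "even_set (edg G ` set ds)"
  unfolding even_set_def
proof
  fix v
  have wp: "walk_in G S ds" and cl: "vert G (al (last ds)) = vert G (hd ds)"
    and dv1: "distinct (map (vert G) ds)" and de: "distinct (map (edg G) ds)"
    using c unfolding dcycle_def by auto
  have ne: "ds \<noteq> []" using walk_nonempty[OF wp] .
  have dsD: "set ds \<subseteq> D" using walk_setD[OF wp] .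
  have H: "map (\<lambda>x. vert G (al x)) ds = tl (map (vert G) ds) @ [vert G (hd ds)]"
    using heads[OF wp] cl unfolding path_verts_def using ne by (cases ds) auto
  have "distinct (tl (map (vert G) ds) @ [vert G (hd ds)])"
    using dv1 ne by (cases ds) auto
  hence dh: "distinct (map (\<lambda>x. vert G (al x)) ds)" using H by simp
  have sH: "(\<lambda>x. vert G (al x)) ` set ds = vert G ` set ds"
  proof -
    have "(\<lambda>x. vert G (al x)) ` set ds = set (tl (map (vert G) ds) @ [vert G (hd ds)])"
      using H by (metis list.set_map)
    also have "\<dots> = vert G ` set ds" using ne by (cases ds) auto
    finally show ?thesis .
  qed
  have i1: "inj_on (vert G) (set ds)" using dv1 by (simp add: distinct_map)
  have i2: "inj_on (\<lambda>x. vert G (al x)) (set ds)" using dh by (simp add: distinct_map)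
  have i3: "inj_on (edg G) (set ds)" using de by (simp add: distinct_map)
  define Out where "Out = {x \<in> set ds. vert G x = v}"
  define In0 where "In0 = {x \<in> set ds. vert G (al x) = v}"
  have cO: "card Out = (if v \<in> vert G ` set ds then 1 else 0)"
    unfolding Out_def using card_filter_inj[OF i1] .
  have cI0: "card In0 = (if v \<in> vert G ` set ds then 1 else 0)"
    unfolding In0_def using card_filter_inj[OF i2, of v] sH by simp
  have "In0 \<subseteq> D" using dsD unfolding In0_def by auto
  hence "inj_on al In0" using inj_on_subset[OF al_inj] by simp
  hence cI: "card (al ` In0) = card In0" by (rule card_image)
  have disj: "Out \<inter> al ` In0 = {}"
  proof (rule ccontr)
    assume "Out \<inter> al ` In0 \<noteq> {}"
    then obtain x where x: "x \<in> In0" "al x \<in> set ds" unfolding Out_def by auto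
    have xs: "x \<in> set ds" using x(1) unfolding In0_def by simp
    have xD: "x \<in> D" using dsD xs by auto
    have "edg G (al x) = edg G x" using xD by simp
    hence "al x = x" using i3 x(2) xs unfolding inj_on_def by blast
    thus False using al_neq[OF xD] by simp
  qed
  have eq: "dv (edg G ` set ds) v = Out \<union> al ` In0"
  proof
    show "dv (edg G ` set ds) v \<subseteq> Out \<union> al ` In0"
    proof
      fix z assume "z \<in> dv (edg G ` set ds) v"
      then obtain x where z: "z \<in> D" "vert G z = v" "x \<in> set ds" "edg G z = edg G x"
        unfolding dv_def by auto
      have xD: "x \<in> D" using dsD z(3) by auto
      have "z = x \<or> z = al x" using edg_eq_iff[OF xD z(1)] z(4) by simp
      thus "z \<in> Out \<union> al ` In0" unfolding Out_def In0_def using z by auto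
    qed
  next
    show "Out \<union> al ` In0 \<subseteq> dv (edg G ` set ds) v"
    proof
      fix z assume "z \<in> Out \<union> al ` In0"
      thus "z \<in> dv (edg G ` set ds) v"
      proof
        assume "z \<in> Out" thus ?thesis unfolding Out_def dv_def using dsD by auto
      next
        assume "z \<in> al ` In0"
        then obtain x where x: "z = al x" "x \<in> set ds" "vert G (al x) = v" unfolding In0_def by auto
        have xD: "x \<in> D" using dsD x(2) by auto
        show ?thesis unfolding dv_def using x xD by (auto intro: image_eqI[of _ _ x])
      qed
    qed
  qed
  have fO: "finite Out" unfolding Out_def by simp
  have fI: "finite (al ` In0)" unfolding In0_def by simp
  have "card (dv (edg G ` set ds) v) = card Out + card (al ` In0)"
    unfolding eq using card_Un_disjoint[OF fO fI disj] .
  thus "even (card (dv (edg G ` set ds) v))" using cO cI0 cI by simp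
qed

lemma even_card_symdiff:
  assumes "finite P" "finite Q" "even (card P)" "even (card Q)"
  shows "even (card ((P - Q) \<union> (Q - P)))"
proof -
  have pe: "P = (P - Q) \<union> (P \<inter> Q)" by blast
  have a: "card P = card (P - Q) + card (P \<inter> Q)"
    using assms(1) by (subst pe, intro card_Un_disjoint) auto
  have qe: "Q = (Q - P) \<union> (P \<inter> Q)" by blast
  have b: "card Q = card (Q - P) + card (P \<inter> Q)"
    using assms(2) by (subst qe, intro card_Un_disjoint) auto
  have c: "card ((P - Q) \<union> (Q - P)) = card (P - Q) + card (Q - P)"
    using assms(1,2) by (intro card_Un_disjoint) auto
  show ?thesis using a b c assms(3,4) by presburger
qed

lemma even_symdiff:
  assumes "even_set A" "even_set B"
  shows "even_set ((A - B) \<union> (B - A))"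
  unfolding even_set_def
proof
  fix v
  have "dv ((A - B) \<union> (B - A)) v = (dv A v - dv B v) \<union> (dv B v - dv A v)"
    unfolding dv_def by auto
  thus "even (card (dv ((A - B) \<union> (B - A)) v))"
    using even_card_symdiff[OF fin_dv fin_dv] assms unfolding even_set_def by simp
qed

end


lemma bool_aux: "(x::bool) \<noteq> y \<Longrightarrow> (x \<noteq> z) = (y = z)" by (cases x; cases y; cases z) simp_all

lemma cyc_change: fixes b :: "nat \<Rightarrow> bool" shows "even (card {k. k < p \<and> b k \<noteq> b (Suc k)}) = (b p = b 0)"
proof (induction p)
  case 0 thus ?case by simp
next
  case (Suc p)
  have e: "{k. k < Suc p \<and> b k \<noteq> b (Suc k)} = {k. k < p \<and> b k \<noteq> b (Suc k)} \<union> (if b p \<noteq> b (Suc p) then {p} else {})"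
    by (auto simp: less_Suc_eq)
  have f: "finite {k. k < p \<and> b k \<noteq> b (Suc k)}" by simp
  show ?case
  proof (cases "b p \<noteq> b (Suc p)")
    case True
    hence "card {k. k < Suc p \<and> b k \<noteq> b (Suc k)} = Suc (card {k. k < p \<and> b k \<noteq> b (Suc k)})"
      using e f by simp
    hence "even (card {k. k < Suc p \<and> b k \<noteq> b (Suc k)}) = (\<not> (b p = b 0))" using Suc.IH by simp
    also have "\<dots> = (b (Suc p) = b 0)" using bool_aux[OF True] by simp
    finally show ?thesis .
  next
    case False
    hence "card {k. k < Suc p \<and> b k \<noteq> b (Suc k)} = card {k. k < p \<and> b k \<noteq> b (Suc k)}"
      using e by simp
    thus ?thesis using Suc.IH False by simp
  qed
qed

context pg begin

definition bd :: "'d set set \<Rightarrow> 'd set set" where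
  "bd X = {edg G x | x. x \<in> D \<and> (rface G x \<in> X) \<noteq> (lface G x \<in> X)}"

lemma lface_al: "x \<in> D \<Longrightarrow> lface G (al x) = rface G x"
  unfolding lface_def by simp
lemma rface_al: "rface G (al x) = lface G x"
  unfolding lface_def by simp

lemma bd_iff: "x \<in> D \<Longrightarrow> edg G x \<in> bd X \<longleftrightarrow> (rface G x \<in> X) \<noteq> (lface G x \<in> X)"
proof
  assume x: "x \<in> D" and "edg G x \<in> bd X"
  then obtain y where y: "y \<in> D" "edg G y = edg G x" "(rface G y \<in> X) \<noteq> (lface G y \<in> X)"
    unfolding bd_def by auto
  have "x = y \<or> x = al y" using edg_eq_iff[OF y(1) x] y(2) by simp
  thus "(rface G x \<in> X) \<noteq> (lface G x \<in> X)"
    using y(3) lface_al[OF y(1)] rface_al[of y] by auto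
next
  assume "x \<in> D" "(rface G x \<in> X) \<noteq> (lface G x \<in> X)"
  thus "edg G x \<in> bd X" unfolding bd_def by blast
qed

lemma bd_edges: "bd X \<subseteq> edges G"
  unfolding bd_def edges_def by auto

lemma vert_funpow: "x \<in> D \<Longrightarrow> vert G ((sg ^^ k) x) = vert G x"
proof (induction k)
  case 0 thus ?case by simp
next
  case (Suc k)
  have "(sg ^^ k) x \<in> D" using perm_funpow_in[OF sg_perm Suc.prems] .
  thus ?case using Suc by simp
qed

lemma bd_even: "even_set (bd X)"
  unfolding even_set_def
proof
  fix v
  show "even (card (dv (bd X) v))"
  proof (cases "\<exists>z0 \<in> D. vert G z0 = v")
    case False
    hence "dv (bd X) v = {}" unfolding dv_def by auto
    thus ?thesis by simp
  next
    case True
    then obtain z0 where z0: "z0 \<in> D" "vert G z0 = v" by auto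
    define g where "g k = (sg ^^ k) z0" for k
    have ex: "\<exists>n. n > 0 \<and> (sg ^^ n) z0 = z0" using perm_return[OF finD sg_perm z0(1)] by auto
    define p where "p = (LEAST n. n > 0 \<and> (sg ^^ n) z0 = z0)"
    have p: "p > 0" "(sg ^^ p) z0 = z0" using LeastI_ex[OF ex] unfolding p_def by auto
    have pmin: "\<And>m. 0 < m \<Longrightarrow> m < p \<Longrightarrow> (sg ^^ m) z0 \<noteq> z0"
      using not_less_Least unfolding p_def by blast
    have inj: "inj_on g {0..<p}" unfolding g_def using inj_on_funpow_least[OF p(2) pmin] by simp
    have gD: "g k \<in> D" for k unfolding g_def using perm_funpow_in[OF sg_perm z0(1)] .
    have gS: "g (Suc k) = sg (g k)" for k unfolding g_def by simp
    define b where "b k = (rface G (g k) \<in> X)" for k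
    have lf: "lface G (g k) = rface G (g (Suc k))" for k using lface_eq[OF gD] gS by simp
    have eq: "dv (bd X) v = g ` {k. k < p \<and> b k \<noteq> b (Suc k)}"
    proof
      show "dv (bd X) v \<subseteq> g ` {k. k < p \<and> b k \<noteq> b (Suc k)}"
      proof
        fix x assume x: "x \<in> dv (bd X) v"
        hence xD: "x \<in> D" and xv: "vert G x = vert G z0" and xb: "edg G x \<in> bd X"
          unfolding dv_def using z0 by auto
        have "x \<in> orb sg z0" using vert_eq_iff[OF z0(1), of x] xv[symmetric] unfolding vert_def by simp
        then obtain m where m: "x = (sg ^^ m) z0" unfolding orb_def by auto
        have "x = g (m mod p)" unfolding g_def using funpow_mod[OF p(2)] m by simp
        moreover have "m mod p < p" using p(1) by simp
        moreover have "b (m mod p) \<noteq> b (Suc (m mod p))"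
          using bd_iff[OF xD] xb \<open>x = g (m mod p)\<close> lf unfolding b_def by simp
        ultimately show "x \<in> g ` {k. k < p \<and> b k \<noteq> b (Suc k)}" by blast
      qed
    next
      show "g ` {k. k < p \<and> b k \<noteq> b (Suc k)} \<subseteq> dv (bd X) v"
      proof
        fix x assume "x \<in> g ` {k. k < p \<and> b k \<noteq> b (Suc k)}"
        then obtain k where k: "x = g k" "b k \<noteq> b (Suc k)" by auto
        have "vert G x = v" using vert_funpow[OF z0(1)] z0(2) k(1) unfolding g_def by simp
        moreover have "edg G x \<in> bd X" using bd_iff[OF gD] k lf unfolding b_def by simp
        ultimately show "x \<in> dv (bd X) v" unfolding dv_def using gD k(1) by simp
      qed
    qed
    have "inj_on g {k. k < p \<and> b k \<noteq> b (Suc k)}" by (rule inj_on_subset[OF inj]) auto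
    hence "card (dv (bd X) v) = card {k. k < p \<and> b k \<noteq> b (Suc k)}" unfolding eq by (rule card_image)
    moreover have "b p = b 0" unfolding b_def g_def using p(2) by simp
    ultimately show ?thesis using cyc_change[of p b] by simp
  qed
qed

definition dstep :: "'d set set \<Rightarrow> ('d set \<times> 'd set) set" where
  "dstep N = {(rface G x, lface G x) | x. x \<in> D \<and> edg G x \<in> N}"

lemma dstepI: "x \<in> D \<Longrightarrow> edg G x \<in> N \<Longrightarrow> (rface G x, lface G x) \<in> dstep N"
  unfolding dstep_def by blast

lemma dstepE: "(a, b) \<in> dstep N \<Longrightarrow> (\<And>x. x \<in> D \<Longrightarrow> edg G x \<in> N \<Longrightarrow> a = rface G x \<Longrightarrow> b = lface G x \<Longrightarrow> P) \<Longrightarrow> P"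
  unfolding dstep_def by blast

lemma dstep_sym: "(a, b) \<in> dstep N \<Longrightarrow> (b, a) \<in> dstep N"
proof -
  assume "(a, b) \<in> dstep N"
  then obtain x where x: "x \<in> D" "edg G x \<in> N" "a = rface G x" "b = lface G x" by (rule dstepE)
  have "(rface G (al x), lface G (al x)) \<in> dstep N" using x by (intro dstepI) auto
  thus ?thesis using x lface_al[OF x(1)] rface_al[of x] by simp
qed

lemma dstep_rtrancl_sym: "(a, b) \<in> (dstep N)\<^sup>* \<Longrightarrow> (b, a) \<in> (dstep N)\<^sup>*"
proof -
  have "sym (dstep N)" unfolding sym_def using dstep_sym by blast
  hence "sym ((dstep N)\<^sup>*)" by (rule sym_rtrancl)
  thus "(a, b) \<in> (dstep N)\<^sup>* \<Longrightarrow> (b, a) \<in> (dstep N)\<^sup>*" unfolding sym_def by blast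
qed

lemma dstep_mono: "N \<subseteq> N' \<Longrightarrow> (a, b) \<in> (dstep N)\<^sup>* \<Longrightarrow> (a, b) \<in> (dstep N')\<^sup>*"
proof -
  assume "N \<subseteq> N'"
  hence "dstep N \<subseteq> dstep N'" unfolding dstep_def by blast
  thus "(a, b) \<in> (dstep N)\<^sup>* \<Longrightarrow> (a, b) \<in> (dstep N')\<^sup>*" using rtrancl_mono by blast
qed

lemma dual_step_eq: "dual_step G C = dstep (- C)"
  unfolding dual_step_def dstep_def by auto

lemma bd_closed:
  assumes "\<forall>x \<in> D. edg G x \<in> N \<longrightarrow> edg G x \<notin> bd X" "(a, b) \<in> (dstep N)\<^sup>*"
  shows "a \<in> X \<longleftrightarrow> b \<in> X"
  using assms(2)
proof (induction rule: rtrancl_induct)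
  case base thus ?case by simp
next
  case (step b c)
  from step(2) obtain x where x: "x \<in> D" "edg G x \<in> N" "b = rface G x" "c = lface G x" by (rule dstepE)
  have "edg G x \<notin> bd X" using assms(1) x by blast
  thus ?case using bd_iff[OF x(1)] x step(3) by simp
qed

lemma rtrancl_exit:
  assumes "(a, b) \<in> R\<^sup>*" "a \<in> U" "b \<notin> U"
  shows "\<exists>g h. (g, h) \<in> R \<and> g \<in> U \<and> h \<notin> U"
  using assms
proof (induction rule: rtrancl_induct)
  case base thus ?case by simp
next
  case (step b c)
  show ?case
  proof (cases "b \<in> U")
    case True thus ?thesis using step by blast
  next
    case False thus ?thesis using step by blast
  qed
qed

lemma faces_connected:
  assumes "x \<in> D" "y \<in> D"
  shows "(rface G x, rface G y) \<in> (dstep UNIV)\<^sup>*"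
proof -
  define Rel where "Rel = {(x, al x) | x. x \<in> D} \<union> {(x, sg x) | x. x \<in> D}"
  have "(x, y) \<in> Rel\<^sup>*" using pg assms unfolding plane_graph_def map_connected_def Rel_def by blast
  thus ?thesis
  proof (induction rule: rtrancl_induct)
    case base thus ?case by simp
  next
    case (step y z)
    from step(2) obtain u where u: "u \<in> D" "y = u" "z = al u \<or> z = sg u" unfolding Rel_def by blast
    have st: "(rface G u, lface G u) \<in> dstep UNIV" using u(1) by (intro dstepI) auto
    have "rface G z = lface G u" using u(3) rface_sg[OF u(1)] rface_al[of u] by auto
    thus ?case using step(3) st u(2) by (metis rtrancl.rtrancl_into_rtrancl)
  qed
qed

end


lemma conn_card:
  fixes s t :: "'e \<Rightarrow> 'v" and E :: "'e \<Rightarrow> 'k"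
  assumes fX: "finite X" and fV: "finite V" and r: "r \<in> V"
    and conn: "\<forall>v\<in>V. (v, r) \<in> R\<^sup>*"
    and real: "\<forall>a b. (a, b) \<in> R \<longrightarrow> (\<exists>x\<in>X. s x = a \<and> t x = b)"
    and ed: "\<forall>x\<in>X. \<forall>y\<in>X. E x = E y \<longrightarrow> (s x = s y \<and> t x = t y) \<or> (s x = t y \<and> t x = s y)"
  shows "card V \<le> card (E ` X) + 1"
proof -
  define dist where "dist v = (LEAST n. (v, r) \<in> R ^^ n)" for v
  have dist_in: "(v, r) \<in> R ^^ dist v" if h: "(v, r) \<in> R\<^sup>*" for v
  proof -
    obtain n where "(v, r) \<in> R ^^ n" using rtrancl_imp_relpow[OF h] by auto
    thus ?thesis unfolding dist_def by (rule LeastI)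
  qed
  have dist_le: "dist v \<le> n" if "(v, r) \<in> R ^^ n" for v n
    unfolding dist_def using that by (rule Least_le)
  have step: "\<exists>w. (v, w) \<in> R \<and> Suc (dist w) = dist v" if v: "v \<in> V" "v \<noteq> r" for v
  proof -
    have vr: "(v, r) \<in> R ^^ dist v" using dist_in conn v by blast
    obtain k where k: "dist v = Suc k"
    proof (cases "dist v")
      case 0 thus ?thesis using vr v(2) by (auto elim: relpow_0_E)
    next
      case (Suc k) thus ?thesis using that by simp
    qed
    obtain w where w: "(v, w) \<in> R" "(w, r) \<in> R ^^ k" using relpow_Suc_D2 vr k by metis
    have "dist w \<le> k" using dist_le[OF w(2)] .
    moreover have "\<not> dist w < k"
    proof
      assume "dist w < k"
      have "(w, r) \<in> R ^^ dist w" using dist_in w(2) rtrancl_power by blast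
      hence "(v, r) \<in> R ^^ Suc (dist w)" using relpow_Suc_I2[OF w(1)] by blast
      hence "dist v \<le> Suc (dist w)" by (rule dist_le)
      thus False using k \<open>dist w < k\<close> by simp
    qed
    ultimately have "dist w = k" by simp
    thus ?thesis using w k by auto
  qed
  define nxt where "nxt v = (SOME w. (v, w) \<in> R \<and> Suc (dist w) = dist v)" for v
  have nxt: "(v, nxt v) \<in> R \<and> Suc (dist (nxt v)) = dist v" if "v \<in> V" "v \<noteq> r" for v
    unfolding nxt_def using someI_ex[OF step[OF that]] .
  define ex where "ex v = (SOME x. x \<in> X \<and> s x = v \<and> t x = nxt v)" for v
  have ex: "ex v \<in> X \<and> s (ex v) = v \<and> t (ex v) = nxt v" if "v \<in> V" "v \<noteq> r" for v
  proof -
    have "\<exists>x. x \<in> X \<and> s x = v \<and> t x = nxt v" using real nxt[OF that] by blast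
    thus ?thesis unfolding ex_def by (rule someI_ex)
  qed
  have inj: "inj_on (\<lambda>v. E (ex v)) (V - {r})"
  proof (rule inj_onI)
    fix v1 v2 assume v1: "v1 \<in> V - {r}" and v2: "v2 \<in> V - {r}" and e: "E (ex v1) = E (ex v2)"
    have x1: "ex v1 \<in> X" "s (ex v1) = v1" "t (ex v1) = nxt v1" using ex v1 by auto
    have x2: "ex v2 \<in> X" "s (ex v2) = v2" "t (ex v2) = nxt v2" using ex v2 by auto
    have n1: "Suc (dist (nxt v1)) = dist v1" using nxt v1 by auto
    have n2: "Suc (dist (nxt v2)) = dist v2" using nxt v2 by auto
    have "(v1 = v2 \<and> nxt v1 = nxt v2) \<or> (v1 = nxt v2 \<and> nxt v1 = v2)"
      using ed x1 x2 e by metis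
    thus "v1 = v2"
    proof
      assume "v1 = nxt v2 \<and> nxt v1 = v2"
      hence "Suc (dist v2) = dist v1" "Suc (dist v1) = dist v2" using n1 n2 by auto
      thus ?thesis by simp
    qed simp
  qed
  have sub: "(\<lambda>v. E (ex v)) ` (V - {r}) \<subseteq> E ` X" using ex by auto
  have "card (V - {r}) \<le> card (E ` X)" using card_inj_on_le[OF inj sub] fX by simp
  moreover have "card V = card (V - {r}) + 1"
  proof -
    have "card V > 0" using fV r card_gt_0_iff by blast
    thus ?thesis using fV r by (simp add: card_Diff_singleton)
  qed
  ultimately show ?thesis by simp
qed


context pg begin

lemma local_sweep:
  assumes y: "y \<in> D" and ax: "ax \<in> D" and v: "vert G y = vert G ax" and ne: "y \<noteq> ax"
    and hz: "\<forall>z\<in>D. vert G z = vert G y \<longrightarrow> z \<noteq> y \<longrightarrow> z \<noteq> ax \<longrightarrow> ((rface G z \<in> X) = (lface G z \<in> X))"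
  shows "(lface G y \<in> X) = (rface G ax \<in> X)"
proof -
  have "ax \<in> orb sg y" using vert_eq_iff[OF y, of ax] v unfolding vert_def by simp
  hence ex: "\<exists>m. (sg ^^ m) y = ax" unfolding orb_def by auto
  define m0 where "m0 = (LEAST m. (sg ^^ m) y = ax)"
  have m0: "(sg ^^ m0) y = ax" unfolding m0_def using LeastI_ex[OF ex] .
  have nax: "j < m0 \<Longrightarrow> (sg ^^ j) y \<noteq> ax" for j unfolding m0_def using not_less_Least by blast
  have m0pos: "m0 > 0" using m0 ne by (cases m0) auto
  have noret: "0 < j \<Longrightarrow> j < m0 \<Longrightarrow> (sg ^^ j) y \<noteq> y" for j
  proof
    assume j: "0 < j" "j < m0" and r: "(sg ^^ j) y = y"
    have "(sg ^^ (m0 mod j)) y = ax" using funpow_mod[OF r, of m0] m0 by simp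
    moreover have "m0 mod j < m0" using j by (meson less_trans mod_less_divisor)
    ultimately show False using nax by blast
  qed
  have fD: "(sg ^^ j) y \<in> D" for j using perm_funpow_in[OF sg_perm y] .
  have claim: "1 \<le> j \<Longrightarrow> j \<le> m0 \<Longrightarrow> (rface G ((sg ^^ j) y) \<in> X) = (lface G y \<in> X)" for j
  proof (induction j)
    case 0 thus ?case by simp
  next
    case (Suc j)
    show ?case
    proof (cases "j = 0")
      case True thus ?thesis using lface_eq[OF y] by simp
    next
      case False
      define z where "z = (sg ^^ j) y"
      have zD: "z \<in> D" unfolding z_def using fD .
      have zv: "vert G z = vert G y" unfolding z_def using vert_funpow[OF y] .
      have zy: "z \<noteq> y" unfolding z_def using noret False Suc.prems by simp
      have za: "z \<noteq> ax" unfolding z_def using nax Suc.prems by simp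
      have "(rface G z \<in> X) = (lface G z \<in> X)" using hz zD zv zy za by blast
      moreover have "lface G z = rface G ((sg ^^ Suc j) y)" using lface_eq[OF zD] unfolding z_def by simp
      moreover have "(rface G z \<in> X) = (lface G y \<in> X)" using Suc False unfolding z_def by simp
      ultimately show ?thesis by simp
    qed
  qed
  show ?thesis using claim[of m0] m0pos m0 by simp
qed

lemma dcycle_heads:
  assumes c: "dcycle G S ds"
  shows "distinct (map (\<lambda>x. vert G (al x)) ds)"
proof -
  have wp: "walk_in G S ds" and cl: "vert G (al (last ds)) = vert G (hd ds)"
    and dv1: "distinct (map (vert G) ds)" using c unfolding dcycle_def by auto
  have ne: "ds \<noteq> []" using walk_nonempty[OF wp] .
  have H: "map (\<lambda>x. vert G (al x)) ds = tl (map (vert G) ds) @ [vert G (hd ds)]"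
    using heads[OF wp] cl unfolding path_verts_def using ne by (cases ds) auto
  have "distinct (tl (map (vert G) ds) @ [vert G (hd ds)])"
    using dv1 ne by (cases ds) auto
  thus ?thesis using H by simp
qed

lemma cycle_lface_const:
  assumes c: "dcycle G S ds" and bX: "bd X = edg G ` set ds" and i: "i < length ds"
  shows "(lface G (ds ! i) \<in> X) = (lface G (ds ! 0) \<in> X)"
  using i
proof (induction i)
  case 0 thus ?case by simp
next
  case (Suc i)
  have wp: "walk_in G S ds" and dv1: "distinct (map (vert G) ds)" and de: "distinct (map (edg G) ds)"
    using c unfolding dcycle_def by auto
  have dh: "distinct (map (\<lambda>x. vert G (al x)) ds)" using dcycle_heads[OF c] .
  have dsD: "set ds \<subseteq> D" using walk_setD[OF wp] .
  have il: "i < length ds" using Suc.prems by simp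
  define y where "y = ds ! Suc i"
  define x where "x = ds ! i"
  have yD: "y \<in> D" using dsD Suc.prems unfolding y_def by auto
  have xD: "x \<in> D" using dsD il unfolding x_def by auto
  have yv: "vert G (al x) = vert G y" using wp Suc.prems unfolding walk_in_def x_def y_def by blast
  have yax: "y \<noteq> al x"
  proof
    assume "y = al x"
    hence "edg G (ds ! Suc i) = edg G (ds ! i)" using xD unfolding x_def y_def by simp
    hence "map (edg G) ds ! Suc i = map (edg G) ds ! i" using Suc.prems il by simp
    hence "Suc i = i" using nth_eq_iff_index_eq[OF de, of "Suc i" i] Suc.prems il by simp
    thus False by simp
  qed
  have hz: "\<forall>z\<in>D. vert G z = vert G y \<longrightarrow> z \<noteq> y \<longrightarrow> z \<noteq> al x \<longrightarrow> ((rface G z \<in> X) = (lface G z \<in> X))"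
  proof (intro ballI impI)
    fix z assume zD: "z \<in> D" and zv: "vert G z = vert G y" and zy: "z \<noteq> y" and zx: "z \<noteq> al x"
    have "edg G z \<notin> edg G ` set ds"
    proof
      assume "edg G z \<in> edg G ` set ds"
      then obtain j where j: "j < length ds" "edg G z = edg G (ds ! j)" by (metis imageE in_set_conv_nth)
      have djD: "ds ! j \<in> D" using dsD j(1) by auto
      have "z = ds ! j \<or> z = al (ds ! j)" using edg_eq_iff[OF djD zD] j(2) by simp
      thus False
      proof
        assume "z = ds ! j"
        hence "vert G (ds ! j) = vert G (ds ! Suc i)" using zv unfolding y_def by simp
        hence "map (vert G) ds ! j = map (vert G) ds ! Suc i" using j(1) Suc.prems by simp
        hence "j = Suc i" using nth_eq_iff_index_eq[OF dv1, of j "Suc i"] j(1) Suc.prems by simp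
        thus False using zy \<open>z = ds ! j\<close> unfolding y_def by simp
      next
        assume "z = al (ds ! j)"
        hence "vert G (al (ds ! j)) = vert G (al (ds ! i))" using zv yv unfolding x_def by simp
        hence "map (\<lambda>x. vert G (al x)) ds ! j = map (\<lambda>x. vert G (al x)) ds ! i" using j(1) il by simp
        hence "j = i" using nth_eq_iff_index_eq[OF dh, of j i] j(1) il by simp
        thus False using zx \<open>z = al (ds ! j)\<close> unfolding x_def by simp
      qed
    qed
    thus "(rface G z \<in> X) = (lface G z \<in> X)" using bd_iff[OF zD, of X] bX by auto
  qed
  have "(lface G y \<in> X) = (rface G (al x) \<in> X)"
    using local_sweep[OF yD al_in[OF xD] yv[symmetric] yax hz] .
  hence "(lface G y \<in> X) = (lface G x \<in> X)" using rface_al[of x] by simp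
  thus ?case using Suc.IH il unfolding x_def y_def by simp
qed

end


locale nt = pg +
  fixes T :: "'a set set" and d0 :: 'a
  assumes T: "spanning_tree G T" and d0: "d0 \<in> darts G" and nT: "edg G d0 \<notin> T"
begin

abbreviation "w \<equiv> edg G d0"
definition "N = edges G - T"
definition "Nw = N - {w}"
definition "S = {f. (rface G d0, f) \<in> (dstep Nw)\<^sup>*}"
definition "S' = {f. (lface G d0, f) \<in> (dstep Nw)\<^sup>*}"

lemma TE: "T \<subseteq> edges G" using T unfolding spanning_tree_def by simp
lemma noc: "\<not> dcycle G T ds" using T unfolding spanning_tree_def by blast
lemma wE: "w \<in> edges G" using edg_in_edges[OF d0] .
lemma wN: "w \<in> N" unfolding N_def using wE nT by simp

lemma no_even_in_T:
  assumes "X \<subseteq> T" "even_set X"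
  shows "X = {}"
proof (rule ccontr)
  assume "X \<noteq> {}"
  then obtain ds where "dcycle G X ds" using even_cycle_exists assms TE by blast
  hence "dcycle G T ds" using dcycle_mono assms(1) by blast
  thus False using noc by blast
qed

lemma dstep_faces: "(a, b) \<in> (dstep M)\<^sup>* \<Longrightarrow> a \<in> faces G \<Longrightarrow> b \<in> faces G"
proof (induction rule: rtrancl_induct)
  case base thus ?case .
next
  case (step b c)
  from step(2) obtain x where "x \<in> D" "c = lface G x" by (rule dstepE)
  thus ?case using lface_in_faces by simp
qed

lemma closed_step:
  assumes "(a, b) \<in> dstep M" "a \<in> Z" "\<And>x. x \<in> D \<Longrightarrow> edg G x \<in> M \<Longrightarrow> rface G x \<in> Z \<Longrightarrow> lface G x \<in> Z"
  shows "b \<in> Z"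
  using assms by (auto elim: dstepE)

lemma S1: "f \<in> faces G \<Longrightarrow> (rface G d0, f) \<in> (dstep N)\<^sup>*"
proof (rule ccontr)
  assume f: "f \<in> faces G" and nf: "(rface G d0, f) \<notin> (dstep N)\<^sup>*"
  define U where "U = {f. (rface G d0, f) \<in> (dstep N)\<^sup>*}"
  obtain y where y: "y \<in> D" "f = rface G y" using f unfolding faces_def by auto
  have "(rface G d0, f) \<in> (dstep UNIV)\<^sup>*" using faces_connected[OF d0 y(1)] y by simp
  moreover have "rface G d0 \<in> U" unfolding U_def by simp
  moreover have "f \<notin> U" unfolding U_def using nf by simp
  ultimately have "\<exists>g h. (g, h) \<in> dstep UNIV \<and> g \<in> U \<and> h \<notin> U"
    by (rule rtrancl_exit)
  then obtain g h where gh: "(g, h) \<in> dstep UNIV" "g \<in> U" "h \<notin> U" by blast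
  then obtain x where x: "x \<in> D" "g = rface G x" "h = lface G x" by (auto elim: dstepE)
  have ne: "bd U \<noteq> {}" using bd_iff[OF x(1), of U] x gh by auto
  have sub: "bd U \<subseteq> T"
  proof
    fix e assume e: "e \<in> bd U"
    then obtain z where z: "z \<in> D" "e = edg G z" "(rface G z \<in> U) \<noteq> (lface G z \<in> U)"
      unfolding bd_def by auto
    show "e \<in> T"
    proof (rule ccontr)
      assume "e \<notin> T"
      hence zN: "edg G z \<in> N" unfolding N_def using z edg_in_edges by simp
      have s1: "(rface G z, lface G z) \<in> dstep N" using dstepI[OF z(1) zN] .
      have s2: "(lface G z, rface G z) \<in> dstep N" using dstep_sym[OF s1] .
      have "rface G z \<in> U \<Longrightarrow> lface G z \<in> U" unfolding U_def using s1 by (simp add: rtrancl_into_rtrancl)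
      moreover have "lface G z \<in> U \<Longrightarrow> rface G z \<in> U" unfolding U_def using s2 by (simp add: rtrancl_into_rtrancl)
      ultimately show False using z(3) by blast
    qed
  qed
  show False using no_even_in_T[OF sub bd_even] ne by simp
qed

lemma S_faces: "S \<subseteq> faces G" unfolding S_def using dstep_faces rface_in_faces[OF d0] by blast
lemma S'_faces: "S' \<subseteq> faces G" unfolding S'_def using dstep_faces lface_in_faces[OF d0] by blast

lemma w_steps: "x \<in> D \<Longrightarrow> edg G x = w \<Longrightarrow> (rface G x = rface G d0 \<and> lface G x = lface G d0) \<or> (rface G x = lface G d0 \<and> lface G x = rface G d0)"
proof -
  assume x: "x \<in> D" "edg G x = w"
  hence "x = d0 \<or> x = al d0" using edg_eq_iff[OF d0 x(1)] by simp
  thus ?thesis using lface_al[OF d0] rface_al[of d0] by auto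
qed

lemma S_step: "x \<in> D \<Longrightarrow> edg G x \<in> Nw \<Longrightarrow> (rface G x \<in> S) = (lface G x \<in> S)"
proof -
  assume x: "x \<in> D" "edg G x \<in> Nw"
  have s1: "(rface G x, lface G x) \<in> dstep Nw" using dstepI[OF x] .
  have s2: "(lface G x, rface G x) \<in> dstep Nw" using dstep_sym[OF s1] .
  have "(rface G d0, rface G x) \<in> (dstep Nw)\<^sup>* \<Longrightarrow> (rface G d0, lface G x) \<in> (dstep Nw)\<^sup>*"
    by (erule rtrancl_into_rtrancl[OF _ s1])
  moreover have "(rface G d0, lface G x) \<in> (dstep Nw)\<^sup>* \<Longrightarrow> (rface G d0, rface G x) \<in> (dstep Nw)\<^sup>*"
    by (erule rtrancl_into_rtrancl[OF _ s2])
  moreover have "(lface G d0, rface G x) \<in> (dstep Nw)\<^sup>* \<Longrightarrow> (lface G d0, lface G x) \<in> (dstep Nw)\<^sup>*"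
    by (erule rtrancl_into_rtrancl[OF _ s1])
  moreover have "(lface G d0, lface G x) \<in> (dstep Nw)\<^sup>* \<Longrightarrow> (lface G d0, rface G x) \<in> (dstep Nw)\<^sup>*"
    by (erule rtrancl_into_rtrancl[OF _ s2])
  ultimately show ?thesis unfolding S_def by blast
qed

lemma S'_step: "x \<in> D \<Longrightarrow> edg G x \<in> Nw \<Longrightarrow> (rface G x \<in> S') = (lface G x \<in> S')"
proof -
  assume x: "x \<in> D" "edg G x \<in> Nw"
  have s1: "(rface G x, lface G x) \<in> dstep Nw" using dstepI[OF x] .
  have s2: "(lface G x, rface G x) \<in> dstep Nw" using dstep_sym[OF s1] .
  have "(rface G d0, rface G x) \<in> (dstep Nw)\<^sup>* \<Longrightarrow> (rface G d0, lface G x) \<in> (dstep Nw)\<^sup>*"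
    by (erule rtrancl_into_rtrancl[OF _ s1])
  moreover have "(rface G d0, lface G x) \<in> (dstep Nw)\<^sup>* \<Longrightarrow> (rface G d0, rface G x) \<in> (dstep Nw)\<^sup>*"
    by (erule rtrancl_into_rtrancl[OF _ s2])
  moreover have "(lface G d0, rface G x) \<in> (dstep Nw)\<^sup>* \<Longrightarrow> (lface G d0, lface G x) \<in> (dstep Nw)\<^sup>*"
    by (erule rtrancl_into_rtrancl[OF _ s1])
  moreover have "(lface G d0, lface G x) \<in> (dstep Nw)\<^sup>* \<Longrightarrow> (lface G d0, rface G x) \<in> (dstep Nw)\<^sup>*"
    by (erule rtrancl_into_rtrancl[OF _ s2])
  ultimately show ?thesis unfolding S'_def by blast
qed

lemma N_split: "x \<in> D \<Longrightarrow> edg G x \<in> N \<Longrightarrow> edg G x = w \<or> edg G x \<in> Nw"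
  unfolding Nw_def by auto

lemma card_primal: "card (verts G) \<le> card T + 1"
proof -
  have conn: "\<forall>v\<in>verts G. (v, vert G d0) \<in> (adjR T)\<^sup>*"
    using T vert_in_verts[OF d0] joined_rtrancl unfolding spanning_tree_def by blast
  have real: "\<forall>a b. (a, b) \<in> adjR T \<longrightarrow> (\<exists>x\<in>{x \<in> D. edg G x \<in> T}. vert G x = a \<and> vert G (al x) = b)"
    unfolding adjR_def by blast
  have ed: "\<forall>x\<in>{x \<in> D. edg G x \<in> T}. \<forall>y\<in>{x \<in> D. edg G x \<in> T}. edg G x = edg G y \<longrightarrow>
     (vert G x = vert G y \<and> vert G (al x) = vert G (al y)) \<or> (vert G x = vert G (al y) \<and> vert G (al x) = vert G y)"
  proof (intro ballI impI)
    fix x y assume x: "x \<in> {x \<in> D. edg G x \<in> T}" and y: "y \<in> {x \<in> D. edg G x \<in> T}" and e: "edg G x = edg G y"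
    have "y = x \<or> y = al x" using edg_eq_iff[of x y] x y e by simp
    thus "(vert G x = vert G y \<and> vert G (al x) = vert G (al y)) \<or> (vert G x = vert G (al y) \<and> vert G (al x) = vert G y)"
      using x by auto
  qed
  have img: "edg G ` {x \<in> D. edg G x \<in> T} = T" using TE unfolding edges_def by auto
  show ?thesis using conn_card[of "{x \<in> D. edg G x \<in> T}" "verts G" "vert G d0" "adjR T" "vert G" "\<lambda>x. vert G (al x)" "edg G"]
    conn real ed img finite_verts finD vert_in_verts[OF d0] by simp
qed

lemma S2: "lface G d0 \<notin> S"
proof
  assume l: "lface G d0 \<in> S"
  have allS: "f \<in> S" if f: "f \<in> faces G" for f
  proof -
    have "(rface G d0, f) \<in> (dstep N)\<^sup>*" using S1[OF f] .
    thus ?thesis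
    proof (induction rule: rtrancl_induct)
      case base thus ?case unfolding S_def by simp
    next
      case (step g h)
      from step(2) obtain x where x: "x \<in> D" "edg G x \<in> N" "g = rface G x" "h = lface G x" by (rule dstepE)
      from N_split[OF x(1,2)] show ?case
      proof
        assume "edg G x = w"
        thus ?thesis using w_steps[OF x(1)] x l unfolding S_def by auto
      next
        assume "edg G x \<in> Nw" thus ?thesis using S_step[OF x(1)] x step(3) by simp
      qed
    qed
  qed
  have conn: "\<forall>f\<in>faces G. (f, rface G d0) \<in> (dstep Nw)\<^sup>*"
    using allS dstep_rtrancl_sym unfolding S_def by blast
  let ?X = "{x \<in> D. edg G x \<in> Nw}"
  have real: "\<forall>a b. (a, b) \<in> dstep Nw \<longrightarrow> (\<exists>x\<in>?X. rface G x = a \<and> lface G x = b)"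
    unfolding dstep_def by blast
  have ed: "\<forall>x\<in>?X. \<forall>y\<in>?X. edg G x = edg G y \<longrightarrow>
     (rface G x = rface G y \<and> lface G x = lface G y) \<or> (rface G x = lface G y \<and> lface G x = rface G y)"
  proof (intro ballI impI)
    fix x y assume x: "x \<in> ?X" and y: "y \<in> ?X" and e: "edg G x = edg G y"
    have "y = x \<or> y = al x" using edg_eq_iff[of x y] x y e by simp
    thus "(rface G x = rface G y \<and> lface G x = lface G y) \<or> (rface G x = lface G y \<and> lface G x = rface G y)"
      using x lface_al rface_al by auto
  qed
  have NwE: "Nw \<subseteq> edges G" unfolding Nw_def N_def by auto
  have img: "edg G ` ?X = Nw" using NwE unfolding edges_def by auto
  have cf: "card (faces G) \<le> card Nw + 1"
    using conn_card[of ?X "faces G" "rface G d0" "dstep Nw" "rface G" "lface G" "edg G"]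
    conn real ed img finite_faces finD rface_in_faces[OF d0] by simp
  have cv: "card (verts G) \<le> card T + 1" using card_primal .
  have fN: "finite N" unfolding N_def using finite_edges by simp
  have cNw: "card Nw + 1 = card N"
  proof -
    have "card N > 0" using wN fN card_gt_0_iff by blast
    moreover have "card Nw = card N - 1" unfolding Nw_def using wN fN by (simp add: card_Diff_singleton)
    ultimately show ?thesis by simp
  qed
  have cE: "card (edges G) = card T + card N"
  proof -
    have "edges G = T \<union> N" unfolding N_def using TE by auto
    moreover have "T \<inter> N = {}" unfolding N_def by auto
    moreover have "finite T" using TE finite_edges finite_subset by blast
    ultimately show ?thesis using card_Un_disjoint[of T N] fN by simp
  qed
  have eu: "int (card (verts G)) - int (card (edges G)) + int (card (faces G)) = 2"
    using pg unfolding plane_graph_def by simp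
  show False using cf cv cNw cE eu by linarith
qed

lemma S3: "f \<in> faces G \<Longrightarrow> f \<in> S \<or> f \<in> S'"
proof -
  assume f: "f \<in> faces G"
  have "(rface G d0, f) \<in> (dstep N)\<^sup>*" using S1[OF f] .
  thus ?thesis
  proof (induction rule: rtrancl_induct)
    case base thus ?case unfolding S_def by simp
  next
    case (step g h)
    from step(2) obtain x where x: "x \<in> D" "edg G x \<in> N" "g = rface G x" "h = lface G x" by (rule dstepE)
    from N_split[OF x(1,2)] show ?case
    proof
      assume "edg G x = w"
      thus ?thesis using w_steps[OF x(1)] x unfolding S_def S'_def by auto
    next
      assume "edg G x \<in> Nw" thus ?thesis using S_step[OF x(1)] S'_step[OF x(1)] x step(3) by blast
    qed
  qed
qed

lemma S3': "f \<in> S \<Longrightarrow> f \<notin> S'"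
proof
  assume "f \<in> S" "f \<in> S'"
  hence a: "(rface G d0, f) \<in> (dstep Nw)\<^sup>*" and b: "(lface G d0, f) \<in> (dstep Nw)\<^sup>*" unfolding S_def S'_def by auto
  have "(rface G d0, lface G d0) \<in> (dstep Nw)\<^sup>*" using rtrancl_trans[OF a dstep_rtrancl_sym[OF b]] .
  thus False using S2 unfolding S_def by simp
qed

lemma rd0S: "rface G d0 \<in> S" unfolding S_def by simp
lemma ld0S': "lface G d0 \<in> S'" unfolding S'_def by simp

lemma S4:
  assumes c: "dcycle G (insert w T) ds" and wC: "w \<in> edg G ` set ds"
  shows "bd S = edg G ` set ds"
proof -
  define C where "C = edg G ` set ds"
  have wp: "walk_in G (insert w T) ds" using c unfolding dcycle_def by simp
  have CT: "C \<subseteq> insert w T" unfolding C_def using walk_edges[OF wp] by blast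
  have bS: "bd S \<subseteq> insert w T"
  proof
    fix e assume e: "e \<in> bd S"
    then obtain z where z: "z \<in> D" "e = edg G z" "(rface G z \<in> S) \<noteq> (lface G z \<in> S)"
      unfolding bd_def by auto
    show "e \<in> insert w T"
    proof (rule ccontr)
      assume "e \<notin> insert w T"
      hence "edg G z \<in> Nw" unfolding Nw_def N_def using z edg_in_edges by simp
      thus False using S_step[OF z(1)] z(3) by simp
    qed
  qed
  have wb: "w \<in> bd S" using bd_iff[OF d0, of S] rd0S S2 by simp
  have wC': "w \<in> C" unfolding C_def using wC .
  have sub: "(bd S - C) \<union> (C - bd S) \<subseteq> T"
  proof
    fix e assume e: "e \<in> (bd S - C) \<union> (C - bd S)"
    hence "e \<in> insert w T" using bS CT by auto
    moreover have "e \<noteq> w" using e wb wC' by auto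
    ultimately show "e \<in> T" by simp
  qed
  have ev: "even_set ((bd S - C) \<union> (C - bd S))" using even_symdiff[OF bd_even cycle_even[OF c]] unfolding C_def .
  have "(bd S - C) \<union> (C - bd S) = {}" using no_even_in_T[OF sub ev] .
  thus ?thesis unfolding C_def by blast
qed

lemma S5:
  assumes bC: "bd S = C" and CT: "C \<subseteq> insert w T" and f: "f \<in> faces G"
  shows "(outer_face G, f) \<in> (dual_step G C)\<^sup>* \<longleftrightarrow> ((f \<in> S) = (outer_face G \<in> S))"
proof
  assume "(outer_face G, f) \<in> (dual_step G C)\<^sup>*"
  hence "(outer_face G, f) \<in> (dstep (- C))\<^sup>*" using dual_step_eq by simp
  moreover have "\<forall>x \<in> D. edg G x \<in> - C \<longrightarrow> edg G x \<notin> bd S" using bC by simp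
  ultimately show "(f \<in> S) = (outer_face G \<in> S)" using bd_closed by blast
next
  assume h: "(f \<in> S) = (outer_face G \<in> S)"
  have O: "outer_face G \<in> faces G" unfolding outer_face_def using rface_in_faces[OF outer_in] .
  have NwC: "Nw \<subseteq> - C" using CT unfolding Nw_def N_def by auto
  have "(outer_face G, f) \<in> (dstep Nw)\<^sup>*"
  proof (cases "f \<in> S")
    case True
    hence "outer_face G \<in> S" using h by simp
    hence a: "(rface G d0, outer_face G) \<in> (dstep Nw)\<^sup>*" and b: "(rface G d0, f) \<in> (dstep Nw)\<^sup>*"
      using True unfolding S_def by auto
    show ?thesis using rtrancl_trans[OF dstep_rtrancl_sym[OF a] b] .
  next
    case False
    hence "outer_face G \<notin> S" using h by simp
    hence "outer_face G \<in> S'" "f \<in> S'" using S3 O f False by auto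
    hence a: "(lface G d0, outer_face G) \<in> (dstep Nw)\<^sup>*" and b: "(lface G d0, f) \<in> (dstep Nw)\<^sup>*"
      unfolding S'_def by auto
    show ?thesis using rtrancl_trans[OF dstep_rtrancl_sym[OF a] b] .
  qed
  hence "(outer_face G, f) \<in> (dstep (- C))\<^sup>*" using dstep_mono[OF NwC] by blast
  thus "(outer_face G, f) \<in> (dual_step G C)\<^sup>*" using dual_step_eq by simp
qed

lemma S6:
  assumes c: "dcycle G (insert w T) ds" and x0: "x0 \<in> set ds" "x0 \<in> {d0, al d0}"
  shows "ccw_cycle G ds \<longleftrightarrow> \<not> ((lface G x0 \<in> S) = (outer_face G \<in> S))"
proof -
  have "w = edg G x0" using x0(2) d0 by auto
  have wC: "w \<in> edg G ` set ds" unfolding \<open>w = edg G x0\<close> using x0(1) by (rule imageI)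
  have bC: "bd S = edg G ` set ds" using S4[OF c wC] .
  have wp: "walk_in G (insert w T) ds" using c unfolding dcycle_def by simp
  have CT: "edg G ` set ds \<subseteq> insert w T" using walk_edges[OF wp] by blast
  have dsD: "set ds \<subseteq> D" using walk_setD[OF wp] .
  have const: "(lface G x \<in> S) = (lface G x0 \<in> S)" if x: "x \<in> set ds" for x
  proof -
    obtain i where i: "i < length ds" "ds ! i = x" using x by (metis in_set_conv_nth)
    obtain j where j: "j < length ds" "ds ! j = x0" using x0(1) by (metis in_set_conv_nth)
    show ?thesis using cycle_lface_const[OF c bC i(1)] cycle_lface_const[OF c bC j(1)] i j by simp
  qed
  have ins: "lface G x \<in> inside_faces G (edg G ` set ds) \<longleftrightarrow> \<not> ((lface G x \<in> S) = (outer_face G \<in> S))"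
    if x: "x \<in> set ds" for x
  proof -
    have xD: "x \<in> D" using dsD x by auto
    have lf: "lface G x \<in> faces G" using lface_in_faces[OF xD] .
    show ?thesis unfolding inside_faces_def using S5[OF bC CT lf] lf by simp
  qed
  show ?thesis unfolding ccw_cycle_def
  proof
    assume "\<forall>x\<in>set ds. lface G x \<in> inside_faces G (edg G ` set ds)"
    hence "lface G x0 \<in> inside_faces G (edg G ` set ds)" using x0(1) by blast
    thus "\<not> ((lface G x0 \<in> S) = (outer_face G \<in> S))" using ins[OF x0(1)] by simp
  next
    assume h: "\<not> ((lface G x0 \<in> S) = (outer_face G \<in> S))"
    show "\<forall>x\<in>set ds. lface G x \<in> inside_faces G (edg G ` set ds)"
    proof
      fix x assume x: "x \<in> set ds"
      have "\<not> ((lface G x \<in> S) = (outer_face G \<in> S))" using h const[OF x] by simp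
      thus "lface G x \<in> inside_faces G (edg G ` set ds)" using ins[OF x] by simp
    qed
  qed
qed

lemma cyc_exists:
  assumes x: "x \<in> {d0, al d0}"
  shows "\<exists>ds. dcycle G (insert w T) ds \<and> x \<in> set ds"
proof -
  have xD: "x \<in> D" and ew: "edg G x = w" using x d0 by auto
  have ne: "vert G (al x) \<noteq> vert G x" using vert_al_neq[OF xD] .
  have "joined_in G T (vert G (al x)) (vert G x)"
    using T vert_in_verts xD unfolding spanning_tree_def by simp
  then obtain R where R: "simple_path G T R" "vert G (hd R) = vert G (al x)" "vert G (al (last R)) = vert G x"
    using ne unfolding joined_in_def by auto
  have wR: "walk_in G T R" using R(1) unfolding simple_path_def by simp
  have "edg G x \<notin> edg G ` set R" using walk_edges[OF wR] ew nT by auto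
  hence "dcycle G (insert (edg G x) T) (R @ [x])" using mk_cycle[OF R(1) xD] R(2,3) by simp
  thus ?thesis using ew by auto
qed

lemma OT_iff:
  assumes x: "x \<in> {d0, al d0}"
  shows "x \<in> OT G q T \<longleftrightarrow> \<not> ((lface G x \<in> S) = (outer_face G \<in> S))"
proof -
  have xD: "x \<in> D" and ew: "edg G x = w" using x d0 by auto
  have "x \<in> OT G q T \<longleftrightarrow> (\<exists>ds. dcycle G (insert w T) ds \<and> x \<in> set ds \<and> ccw_cycle G ds)"
    unfolding OT_def using xD ew nT by simp
  also have "\<dots> \<longleftrightarrow> \<not> ((lface G x \<in> S) = (outer_face G \<in> S))"
    using S6[OF _ _ x] cyc_exists[OF x] by blast
  finally show ?thesis .
qed

lemma nontree_main:
  "\<exists>z. OT G q T \<inter> edg G d0 = {z} \<and> lface G z \<noteq> outer_face G"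
proof -
  have l0: "lface G d0 \<notin> S" using S2 .
  have l1: "lface G (al d0) \<in> S" using lface_al[OF d0] rd0S by simp
  have e: "edg G d0 = {d0, al d0}" unfolding edg_def by simp
  have ne: "al d0 \<noteq> d0" using al_neq[OF d0] .
  show ?thesis
  proof (cases "outer_face G \<in> S")
    case True
    have "OT G q T \<inter> edg G d0 = {d0}" using OT_iff[of d0] OT_iff[of "al d0"] l0 l1 True e ne by auto
    moreover have "lface G d0 \<noteq> outer_face G" using l0 True by auto
    ultimately show ?thesis by blast
  next
    case False
    have "OT G q T \<inter> edg G d0 = {al d0}" using OT_iff[of d0] OT_iff[of "al d0"] l0 l1 False e ne by auto
    moreover have "lface G (al d0) \<noteq> outer_face G" using l1 False by auto
    ultimately show ?thesis by blast
  qed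
qed

end

context pg begin

lemma OT_sub: "OT G q T \<subseteq> D" unfolding OT_def by auto

lemma TP_OT: "x \<in> D \<Longrightarrow> edg G x \<in> T \<Longrightarrow> x \<in> OT G q T \<longleftrightarrow> TP q T x"
  unfolding OT_def TP_def by auto

lemma key_edge:
  assumes T: "spanning_tree G T" and d0: "d0 \<in> D" and q: "q \<in> verts G"
  shows "\<exists>z. OT G q T \<inter> edg G d0 = {z} \<and> (edg G d0 \<in> T \<longrightarrow> vert G (al z) \<noteq> q)
             \<and> (edg G d0 \<notin> T \<longrightarrow> lface G z \<noteq> outer_face G)"
proof (cases "edg G d0 \<in> T")
  case False
  interpret nt G T d0 using T d0 False pg by unfold_locales auto
  obtain z where "OT G q T \<inter> edg G d0 = {z}" "lface G z \<noteq> outer_face G"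
    using nontree_main by blast
  thus ?thesis using False by (intro exI[of _ z]) simp
next
  case True
  have a0: "al d0 \<in> D" "edg G (al d0) \<in> T" using d0 True by auto
  have e: "edg G d0 = {d0, al d0}" unfolding edg_def by simp
  have ne: "al d0 \<noteq> d0" using al_neq[OF d0] .
  have head: "vert G (al x) \<noteq> q" if tp: "TP q T x" for x
  proof -
    obtain ds where ds: "simple_path G T ds" "vert G (hd ds) = q" "last ds = x" using tp unfolding TP_def by auto
    show ?thesis using simple_ends[OF ds(1)] ds by simp
  qed
  have i0: "d0 \<in> OT G q T \<longleftrightarrow> TP q T d0" using TP_OT[OF d0 True] .
  have i1: "al d0 \<in> OT G q T \<longleftrightarrow> TP q T (al d0)" using TP_OT[OF a0] .
  have nb: "\<not> (TP q T d0 \<and> TP q T (al d0))" using tree_TP_unique[OF T d0 True] by blast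
  from tree_TP_exists[OF T d0 True q] show ?thesis
  proof
    assume t: "TP q T d0"
    have m1: "d0 \<in> OT G q T" using i0 t by simp
    have m2: "al d0 \<notin> OT G q T" using i1 nb t by simp
    have "OT G q T \<inter> {d0, al d0} = {d0}" using m1 m2 by blast
    hence "OT G q T \<inter> edg G d0 = {d0}" using e by simp
    thus ?thesis using head[OF t] True by (intro exI[of _ d0]) simp
  next
    assume t: "TP q T (al d0)"
    have m1: "al d0 \<in> OT G q T" using i1 t by simp
    have m2: "d0 \<notin> OT G q T" using i0 nb t by simp
    have "OT G q T \<inter> {d0, al d0} = {al d0}" using m1 m2 by blast
    hence "OT G q T \<inter> edg G d0 = {al d0}" using e by simp
    thus ?thesis using head[OF t] True by (intro exI[of _ "al d0"]) simp
  qed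
qed

lemma pos_iff:
  assumes "x \<in> D" "Or \<subseteq> D"
  shows "pos G Or (x, b) \<longleftrightarrow> al x \<in> Or"
proof (cases b)
  case True
  have "(\<exists>od \<in> Or. edg G od = edg G x \<and> vert G (al od) = vert G x) \<longleftrightarrow> al x \<in> Or"
  proof
    assume "\<exists>od \<in> Or. edg G od = edg G x \<and> vert G (al od) = vert G x"
    then obtain od where od: "od \<in> Or" "edg G od = edg G x" "vert G (al od) = vert G x" by blast
    have odD: "od \<in> D" using od(1) assms(2) by auto
    have "od = x \<or> od = al x" using edg_eq_iff[OF assms(1) odD] od(2) by simp
    moreover have "od \<noteq> x" using od(3) vert_al_neq[OF assms(1)] by auto
    ultimately show "al x \<in> Or" using od(1) by auto
  next
    assume "al x \<in> Or"
    thus "\<exists>od \<in> Or. edg G od = edg G x \<and> vert G (al od) = vert G x" using assms(1) by (intro bexI[of _ "al x"]) auto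
  qed
  thus ?thesis using True unfolding pos_def by simp
next
  case False thus ?thesis unfolding pos_def by simp
qed

lemma temperley_at:
  assumes T: "spanning_tree G T" and d0: "d0 \<in> D" and q: "q \<in> verts G"
    and z: "OT G q T \<inter> edg G d0 = {z}" "edg G d0 \<in> T \<longrightarrow> vert G (al z) \<noteq> q"
       "edg G d0 \<notin> T \<longrightarrow> lface G z \<noteq> outer_face G"
  shows "h \<in> temperley G q T \<and> white_end G h = edg G d0 \<longleftrightarrow> h = (al z, edg G d0 \<in> T)"
proof -
  have zD: "z \<in> D" using z(1) OT_sub by blast
  have zw: "z \<in> edg G d0" using z(1) by blast
  have ew: "edg G z = edg G d0" using zw d0 unfolding edg_def by auto
  have key: "x \<in> D \<Longrightarrow> edg G x = edg G d0 \<Longrightarrow> (al x \<in> OT G q T \<longleftrightarrow> x = al z)" for x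
  proof -
    assume xD: "x \<in> D" and xw: "edg G x = edg G d0"
    have "al x \<in> edg G d0" using xw in_edg(2)[of x] by simp
    hence "al x \<in> OT G q T \<longleftrightarrow> al x = z" using z(1) by blast
    also have "\<dots> \<longleftrightarrow> x = al z" using xD zD by auto
    finally show ?thesis .
  qed
  obtain x b where h: "h = (x, b)" by (cases h)
  show ?thesis
  proof
    assume a: "h \<in> temperley G q T \<and> white_end G h = edg G d0"
    have hh: "h \<in> hedges G q" using a unfolding temperley_def by auto
    have xD: "x \<in> D" using hh h unfolding hedges_def by auto
    have xw: "edg G x = edg G d0" using a h unfolding white_end_def by simp
    have p: "pos G (OT G q T) h" using a unfolding temperley_def by auto
    hence "x = al z" using pos_iff[OF xD OT_sub] key[OF xD xw] h by simp
    moreover have "b = (edg G d0 \<in> T)" using a h xw unfolding temperley_def by auto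
    ultimately show "h = (al z, edg G d0 \<in> T)" using h by simp
  next
    assume hz: "h = (al z, edg G d0 \<in> T)"
    have azD: "al z \<in> D" using zD by simp
    have we: "white_end G h = edg G d0" using hz ew zD unfolding white_end_def by simp
    have p: "pos G (OT G q T) h" using hz pos_iff[OF azD OT_sub] zD z(1) by auto
    show "h \<in> temperley G q T \<and> white_end G h = edg G d0"
    proof (cases "edg G d0 \<in> T")
      case True
      have "h \<in> hedges G q" using hz True z(2) azD zD unfolding hedges_def by simp
      thus ?thesis using True hz p we ew zD unfolding temperley_def by simp
    next
      case False
      have "rface G (al z) \<noteq> outer_face G" using z(3) False rface_al[of z] by simp
      hence "h \<in> hedges G q" using hz False azD unfolding hedges_def by simp
      thus ?thesis using False hz p we ew zD unfolding temperley_def by simp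
    qed
  qed
qed

end


theorem lemma3p3:
  fixes G :: "'d pmap" and q :: "'d set" and T0 T :: "'d set set"
  assumes "plane_graph G"
    and "q \<in> verts G" and "on_outer_face G q"
    and "spanning_tree G T0" and "spanning_tree G T"
  shows "same_class G q (OT G q T0)
           (psi_div G q (OT G q T0) (temperley G q T0) (temperley G q T))
           (\<lambda>w. if w \<in> white_vs G \<and> OT G q T0 \<inter> w \<noteq> OT G q T \<inter> w then 1 else 0)"
proof -
  interpret pg G using assms(1) by unfold_locales
  define O0 where "O0 = OT G q T0"
  define O1 where "O1 = OT G q T"
  define M0 where "M0 = temperley G q T0"
  define M1 where "M1 = temperley G q T"
  have pw: "psi_div G q O0 M0 M1 w = (if w \<in> white_vs G \<and> O0 \<inter> w \<noteq> O1 \<inter> w then 1 else 0)" for w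
  proof (cases "w \<in> white_vs G")
    case False thus ?thesis unfolding psi_div_def by simp
  next
    case True
    then obtain d0 where d0: "d0 \<in> D" "w = edg G d0" unfolding white_vs_def edges_def by auto
    obtain z0 where z0: "O0 \<inter> edg G d0 = {z0}" "edg G d0 \<in> T0 \<longrightarrow> vert G (al z0) \<noteq> q"
       "edg G d0 \<notin> T0 \<longrightarrow> lface G z0 \<noteq> outer_face G"
      using key_edge[OF assms(4) d0(1) assms(2)] unfolding O0_def by blast
    obtain z1 where z1: "O1 \<inter> edg G d0 = {z1}" "edg G d0 \<in> T \<longrightarrow> vert G (al z1) \<noteq> q"
       "edg G d0 \<notin> T \<longrightarrow> lface G z1 \<noteq> outer_face G"
      using key_edge[OF assms(5) d0(1) assms(2)] unfolding O1_def by blast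
    define h0 where "h0 = (al z0, edg G d0 \<in> T0)"
    define h1 where "h1 = (al z1, edg G d0 \<in> T)"
    have A: "h \<in> M0 \<and> white_end G h = w \<longleftrightarrow> h = h0" for h
      using temperley_at[OF assms(4) d0(1) assms(2) z0[unfolded O0_def]] d0(2)
      unfolding M0_def h0_def by simp
    have B: "h \<in> M1 \<and> white_end G h = w \<longleftrightarrow> h = h1" for h
      using temperley_at[OF assms(5) d0(1) assms(2) z1[unfolded O1_def]] d0(2)
      unfolding M1_def h1_def by simp
    have z0D: "z0 \<in> D" using z0(1) OT_sub unfolding O0_def by blast
    have z1D: "z1 \<in> D" using z1(1) OT_sub unfolding O1_def by blast
    have O0D: "O0 \<subseteq> D" using OT_sub unfolding O0_def .
    have p0: "pos G O0 h0" using pos_iff[OF al_in[OF z0D] O0D] z0(1) z0D unfolding h0_def by auto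
    have z1w: "z1 \<in> edg G d0" using z1(1) by blast
    have p1: "pos G O0 h1 \<longleftrightarrow> z1 = z0" using pos_iff[OF al_in[OF z1D] O0D] z0(1) z1D z1w
      unfolding h1_def by auto
    have hne: "h0 = h1 \<Longrightarrow> z0 = z1" unfolding h0_def h1_def using z0D z1D by (metis al_al fst_conv)
    have chi: "(O0 \<inter> w \<noteq> O1 \<inter> w) \<longleftrightarrow> z0 \<noteq> z1" using z0(1) z1(1) d0(2) by auto
    have ex: "(\<exists>a\<in>M0 - M1 \<union> (M1 - M0). \<exists>b\<in>M0 - M1 \<union> (M1 - M0). a \<noteq> b \<and>
              white_end G a = w \<and> white_end G b = w \<and> pos G O0 a \<noteq> pos G O0 b) \<longleftrightarrow> z0 \<noteq> z1"
    proof
      assume "\<exists>a\<in>M0 - M1 \<union> (M1 - M0). \<exists>b\<in>M0 - M1 \<union> (M1 - M0). a \<noteq> b \<and>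
              white_end G a = w \<and> white_end G b = w \<and> pos G O0 a \<noteq> pos G O0 b"
      then obtain a b where ab: "a \<in> M0 \<union> M1" "b \<in> M0 \<union> M1" "a \<noteq> b" "white_end G a = w"
        "white_end G b = w" "pos G O0 a \<noteq> pos G O0 b" by blast
      have "a = h0 \<or> a = h1" using ab(1,4) A B by blast
      moreover have "b = h0 \<or> b = h1" using ab(2,5) A B by blast
      ultimately have "pos G O0 h0 \<noteq> pos G O0 h1" using ab(3,6) by auto
      thus "z0 \<noteq> z1" using p0 p1 by auto
    next
      assume ne: "z0 \<noteq> z1"
      hence hn: "h0 \<noteq> h1" using hne by blast
      have a: "h0 \<in> M0 - M1 \<union> (M1 - M0)" using A[of h0] B[of h0] hn by auto
      have b: "h1 \<in> M0 - M1 \<union> (M1 - M0)" using A[of h1] B[of h1] hn by auto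
      have "white_end G h0 = w" "white_end G h1 = w" using A[of h0] B[of h1] by auto
      moreover have "pos G O0 h0 \<noteq> pos G O0 h1" using p0 p1 ne by auto
      ultimately show "\<exists>a\<in>M0 - M1 \<union> (M1 - M0). \<exists>b\<in>M0 - M1 \<union> (M1 - M0). a \<noteq> b \<and>
              white_end G a = w \<and> white_end G b = w \<and> pos G O0 a \<noteq> pos G O0 b"
        using a b hn by blast
    qed
    show ?thesis unfolding psi_div_def using ex chi True by simp
  qed
  have zz: "(\<lambda>w. psi_div G q O0 M0 M1 w - (if w \<in> white_vs G \<and> O0 \<inter> w \<noteq> O1 \<inter> w then 1 else 0))
        = (\<lambda>w. \<Sum>b \<in> black_vs G q. (\<lambda>_. 0) b * r_vec G q O0 b w)"
    using pw by simp
  have "(\<lambda>w. psi_div G q O0 M0 M1 w - (if w \<in> white_vs G \<and> O0 \<inter> w \<noteq> O1 \<inter> w then 1 else 0)) \<in> Prin G q O0"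
    unfolding Prin_def by (intro CollectI exI[of _ "\<lambda>_. 0"]) (use zz in simp)
  thus ?thesis unfolding same_class_def O0_def O1_def M0_def M1_def by simp
qed


end
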